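(* Let $\mathbb{X}\subseteq\mathbb{R}^{n_x}$, $\mathbb{U}\subseteq\mathbb{R}^{n_u}$ with $\mu_L(\mathbb{U})>0$, $T>0$ an integer, $x_0$ drawn from an initial distribution, $x_{t+1}\sim p(\cdot\mid x_t,u_t)$ a transition kernel, $u_t\sim\pi_t(\cdot\mid x_t)$, and cost functions $c_t:\mathbb{X}\times\mathbb{U}\to\mathbb{R}$, $c_T:\mathbb{X}\to\mathbb{R}$. Let $\eta\in\mathbb{R}\setminus\{0,1\}$, and consider the problem $$\underset{\{\pi_t\}_{t=0}^{T-1}}{\mathrm{minimize}}\ \frac{1}{\eta}\log\mathbb{E}\Big[\exp\Big(\eta c_T(x_T)+\eta\sum_{t=0}^{T-1}\big(c_t(x_t,u_t)-\mathcal{H}_{1-\eta}(\pi_t(\cdot\mid x_t))\big)\Big)\Big]\qquad(\ast\ast)$$ over policies with $\pi_t(\cdot\mid x)\in L^{1-\eta}(\mathbb{U})$ for all $x$. Define $\mathscr{V}_T(x)=c_T(x)$ and for $t\in\{0,\dots,T-1\}$ $$\mathscr{V}_t(x)=\inf_{\{\pi_s\}_{s=t}^{T-1}}\frac{1}{\eta}\log\mathbb{E}\Big[\exp\Big(\eta c_T(x_T)+\eta\sum_{s=t}^{T-1}\big(c_s(x_s,u_s)-\mathcal{H}_{1-\eta}(\pi_s(\cdot\mid x_s))\big)\Big)\,\Big|\,x_t=x\Big],$$ $$\mathscr{Q}_t(x,u)=c_t(x,u)+\frac{1}{\eta}\log\mathbb{E}_{p(x_{t+1}\mid x,u)}\big[\exp(\eta\mathscr{V}_{t+1}(x_{t+1}))\big].$$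 Assume that $c_t$ is bounded below for every $t\in\{0,\dots,T\}$, and that for every $x\in\mathbb{X}$ and $t\in\{0,\dots,T-1\}$, $\int_{\mathbb{U}}\exp(-\mathscr{Q}_t(x,u'))\,du'<\infty$ and $\int_{\mathbb{U}}\exp(-(1-\eta)\mathscr{Q}_t(x,u'))\,du'<\infty$. Then the unique optimal policy of $(\ast\ast)$ is $$\pi_t^\star(u_t\mid x_t)=\frac{\exp(-\mathscr{Q}_t(x_t,u_t))}{\mathscr{Z}_t(x_t)},\qquad \mathscr{Z}_t(x_t)=\int_{\mathbb{U}}\exp(-\mathscr{Q}_t(x_t,u'))\,du',$$ for all $t\in\{0,\dots,T-1\}$, $x_t\in\mathbb{X}$, $u_t\in\mathbb{U}$, and $$\mathscr{V}_t(x_t)=\frac{-1}{1-\eta}\log\int_{\mathbb{U}}\exp\big(-(1-\eta)\mathscr{Q}_t(x_t,u')\big)\,du'\quad\text{for all }t\in\{0,\dots,T-1\},\ x_t\in\mathbb{X}.$$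
   Context: For a probability density $p$ on $\mathbb{U}$ and $\alpha\in\mathbb{R}\setminus\{0,1\}$ (including $\alpha<0$), the R\'enyi entropy is $\mathcal{H}_\alpha(p)=\frac{1}{\alpha(1-\alpha)}\log\int_{\{u:p(u)>0\}}p(u)^\alpha\,du$. $L^{\alpha}(\mathbb{U})=\{\rho$ probability density on $\mathbb{U}:\int_{\mathbb{U}}\rho(u)^{\alpha}du<\infty\}$. $\mu_L$ is Lebesgue measure. *)

theory Defs
  imports "HOL-Probability.Probability"
begin

definition ln_enn :: "ennreal \<Rightarrow> ereal" where
  "ln_enn w = (if w = 0 then -\<infinity> else if w = \<top> then \<infinity> else ereal (ln (enn2real w)))"

definition exp_e :: "ereal \<Rightarrow> ennreal" where
  "exp_e z = (if z = \<infinity> then \<top> else if z = -\<infinity> then 0 else ennreal (exp (real_of_ereal z)))"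

text \<open>rho(u)^alpha for rho(u) >= 0 with the convention 0^alpha = +infinity for alpha < 0.\<close>
definition pow_enn :: "real \<Rightarrow> real \<Rightarrow> ennreal" where
  "pow_enn r \<alpha> = (if r > 0 then ennreal (r powr \<alpha>) else if \<alpha> > 0 then 0 else \<top>)"

definition prob_density_on :: "'b::euclidean_space set \<Rightarrow> ('b \<Rightarrow> real) \<Rightarrow> bool" where
  "prob_density_on U \<rho> \<longleftrightarrow> \<rho> \<in> borel_measurable (restrict_space borel U) \<and> (\<forall>u\<in>U. 0 \<le> \<rho> u)
     \<and> (\<integral>\<^sup>+u\<in>U. ennreal (\<rho> u) \<partial>lborel) = 1"

definition Lpow :: "real \<Rightarrow> 'b::euclidean_space set \<Rightarrow> ('b \<Rightarrow> real) set" where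
  "Lpow \<alpha> U = {\<rho>. prob_density_on U \<rho> \<and> (\<integral>\<^sup>+u\<in>U. pow_enn (\<rho> u) \<alpha> \<partial>lborel) < \<top>}"

definition renyi :: "real \<Rightarrow> 'b::euclidean_space set \<Rightarrow> ('b \<Rightarrow> real) \<Rightarrow> real" where
  "renyi \<alpha> U p = ln (enn2real (\<integral>\<^sup>+u\<in>{u\<in>U. p u > 0}. ennreal (p u powr \<alpha>) \<partial>lborel)) / (\<alpha> * (1 - \<alpha>))"

text \<open>A (Markov) policy: pi s x is the density of u_s given x_s = x; admissible from time t
  means jointly measurable and in L^(1-eta)(U) for every x in X, at every time s in [t, T).\<close>
definition admissible_policy ::
  "real \<Rightarrow> nat \<Rightarrow> 'a::euclidean_space set \<Rightarrow> 'b::euclidean_space set \<Rightarrow> nat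
     \<Rightarrow> (nat \<Rightarrow> 'a \<Rightarrow> 'b \<Rightarrow> real) \<Rightarrow> bool" where
  "admissible_policy \<eta> T X U t \<pi> \<longleftrightarrow>
     (\<forall>s. t \<le> s \<and> s < T \<longrightarrow>
        (\<lambda>(x, u). \<pi> s x u) \<in> borel_measurable (restrict_space borel (X \<times> U))
        \<and> (\<forall>x\<in>X. \<pi> s x \<in> Lpow (1 - \<eta>) U))"

text \<open>risk_obj ... k t x = E[exp(eta c_T(x_T) + eta sum_{s=t}^{T-1} (c_s(x_s,u_s) - H(pi_s(.|x_s)))) | x_t = x]
  where k = T - t is the number of remaining steps (Markov recursion of the conditional expectation).\<close>
fun risk_obj ::
  "real \<Rightarrow> 'b::euclidean_space set \<Rightarrow> ('a \<Rightarrow> 'b \<Rightarrow> 'a measure) \<Rightarrow> (nat \<Rightarrow> 'a \<Rightarrow> 'b \<Rightarrow> real)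
     \<Rightarrow> ('a \<Rightarrow> real) \<Rightarrow> (nat \<Rightarrow> 'a \<Rightarrow> 'b \<Rightarrow> real) \<Rightarrow> nat \<Rightarrow> nat \<Rightarrow> 'a \<Rightarrow> ennreal" where
  "risk_obj \<eta> U K c cT \<pi> 0 t x = ennreal (exp (\<eta> * cT x))"
| "risk_obj \<eta> U K c cT \<pi> (Suc k) t x =
     (\<integral>\<^sup>+u\<in>U. ennreal (\<pi> t x u * exp (\<eta> * (c t x u - renyi (1 - \<eta>) U (\<pi> t x))))
              * (\<integral>\<^sup>+y. risk_obj \<eta> U K c cT \<pi> k (Suc t) y \<partial>(K x u)) \<partial>lborel)"

definition cost_to_go ::
  "real \<Rightarrow> nat \<Rightarrow> 'b::euclidean_space set \<Rightarrow> ('a \<Rightarrow> 'b \<Rightarrow> 'a measure) \<Rightarrow> (nat \<Rightarrow> 'a \<Rightarrow> 'b \<Rightarrow> real)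
     \<Rightarrow> ('a \<Rightarrow> real) \<Rightarrow> (nat \<Rightarrow> 'a \<Rightarrow> 'b \<Rightarrow> real) \<Rightarrow> nat \<Rightarrow> 'a \<Rightarrow> ereal" where
  "cost_to_go \<eta> T U K c cT \<pi> t x = ereal (1 / \<eta>) * ln_enn (risk_obj \<eta> U K c cT \<pi> (T - t) t x)"

definition total_obj ::
  "real \<Rightarrow> nat \<Rightarrow> 'b::euclidean_space set \<Rightarrow> ('a \<Rightarrow> 'b \<Rightarrow> 'a measure) \<Rightarrow> (nat \<Rightarrow> 'a \<Rightarrow> 'b \<Rightarrow> real)
     \<Rightarrow> ('a \<Rightarrow> real) \<Rightarrow> 'a measure \<Rightarrow> (nat \<Rightarrow> 'a \<Rightarrow> 'b \<Rightarrow> real) \<Rightarrow> ereal" where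
  "total_obj \<eta> T U K c cT \<mu>0 \<pi> =
     ereal (1 / \<eta>) * ln_enn (\<integral>\<^sup>+x. risk_obj \<eta> U K c cT \<pi> T 0 x \<partial>\<mu>0)"

definition value_fn ::
  "real \<Rightarrow> nat \<Rightarrow> 'a::euclidean_space set \<Rightarrow> 'b::euclidean_space set \<Rightarrow> ('a \<Rightarrow> 'b \<Rightarrow> 'a measure)
     \<Rightarrow> (nat \<Rightarrow> 'a \<Rightarrow> 'b \<Rightarrow> real) \<Rightarrow> ('a \<Rightarrow> real) \<Rightarrow> nat \<Rightarrow> 'a \<Rightarrow> ereal" where
  "value_fn \<eta> T X U K c cT t x =
     (if t = T then ereal (cT x)
      else (INF \<pi> \<in> {\<pi>. admissible_policy \<eta> T X U t \<pi>}. cost_to_go \<eta> T U K c cT \<pi> t x))"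

definition Q_fn ::
  "real \<Rightarrow> nat \<Rightarrow> 'a::euclidean_space set \<Rightarrow> 'b::euclidean_space set \<Rightarrow> ('a \<Rightarrow> 'b \<Rightarrow> 'a measure)
     \<Rightarrow> (nat \<Rightarrow> 'a \<Rightarrow> 'b \<Rightarrow> real) \<Rightarrow> ('a \<Rightarrow> real) \<Rightarrow> nat \<Rightarrow> 'a \<Rightarrow> 'b \<Rightarrow> ereal" where
  "Q_fn \<eta> T X U K c cT t x u =
     ereal (c t x u) + ereal (1 / \<eta>) *
       ln_enn (\<integral>\<^sup>+y. exp_e (ereal \<eta> * value_fn \<eta> T X U K c cT (Suc t) y) \<partial>(K x u))"

definition Z_fn ::
  "real \<Rightarrow> nat \<Rightarrow> 'a::euclidean_space set \<Rightarrow> 'b::euclidean_space set \<Rightarrow> ('a \<Rightarrow> 'b \<Rightarrow> 'a measure)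
     \<Rightarrow> (nat \<Rightarrow> 'a \<Rightarrow> 'b \<Rightarrow> real) \<Rightarrow> ('a \<Rightarrow> real) \<Rightarrow> nat \<Rightarrow> 'a \<Rightarrow> ennreal" where
  "Z_fn \<eta> T X U K c cT t x = (\<integral>\<^sup>+u\<in>U. exp_e (- Q_fn \<eta> T X U K c cT t x u) \<partial>lborel)"

definition opt_policy ::
  "real \<Rightarrow> nat \<Rightarrow> 'a::euclidean_space set \<Rightarrow> 'b::euclidean_space set \<Rightarrow> ('a \<Rightarrow> 'b \<Rightarrow> 'a measure)
     \<Rightarrow> (nat \<Rightarrow> 'a \<Rightarrow> 'b \<Rightarrow> real) \<Rightarrow> ('a \<Rightarrow> real) \<Rightarrow> nat \<Rightarrow> 'a \<Rightarrow> 'b \<Rightarrow> real" where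
  "opt_policy \<eta> T X U K c cT t x u =
     exp (- real_of_ereal (Q_fn \<eta> T X U K c cT t x u)) / enn2real (Z_fn \<eta> T X U K c cT t x)"

end

theory Submission
  imports Defs
begin

lemma powr_sign_aux:
  fixes z \<beta> :: real
  assumes "z > 0" "z \<noteq> 1" "\<beta> \<noteq> 0"
  shows "\<beta> * (z powr \<beta> - 1) * (z - 1) > 0"
proof (cases "z > 1")
  case True
  show ?thesis
  proof (cases "\<beta> > 0")
    case True
    with \<open>z>1\<close> have "z powr \<beta> > 1" by simp
    then show ?thesis using True \<open>z>1\<close> by (simp add: mult_pos_pos)
  next
    case False
    with assms have "\<beta> < 0" by simp
    with \<open>z>1\<close> have "z powr \<beta> < 1" by (simp add: powr_less_one)
    then have "(z powr \<beta> - 1) < 0" by simp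
    then show ?thesis using \<open>\<beta><0\<close> \<open>z>1\<close> by (simp add: mult_neg_neg)
  qed
next
  case False
  with assms have z1: "z < 1" by simp
  show ?thesis
  proof (cases "\<beta> > 0")
    case True
    have "z powr \<beta> < 1 powr \<beta>" using powr_less_mono2[OF True, of z 1] assms z1 by simp
    then have "z powr \<beta> < 1" by simp
    then show ?thesis using True z1 by (simp add: mult_pos_neg mult_neg_neg)
  next
    case False
    with assms have b: "\<beta> < 0" by simp
    have "1 powr \<beta> < z powr \<beta>" using powr_less_mono2_neg[OF b, of z 1] assms z1 by simp
    then have "z powr \<beta> > 1" by simp
    then show ?thesis using b z1 by (simp add: mult_neg_neg mult_neg_pos)
  qed
qed

lemma tangent_strict:
  fixes x \<alpha> :: real
  assumes "\<alpha> \<noteq> 0" "\<alpha> \<noteq> 1" "x > 0 \<or> (x = 0 \<and> \<alpha> > 0)" "x \<noteq> 1"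
  shows "\<alpha> * (\<alpha> - 1) * (x powr \<alpha> - 1 - \<alpha> * (x - 1)) > 0"
proof -
  define g where "g = (\<lambda>x::real. x powr \<alpha> - 1 - \<alpha> * (x - 1))"
  define g' where "g' = (\<lambda>x::real. \<alpha> * (x powr (\<alpha> - 1) - 1))"
  have D: "DERIV g z :> g' z" if "z > 0" for z
    unfolding g_def g'_def
    by (auto intro!: derivative_eq_intros has_real_derivative_powr that simp: algebra_simps)
  show ?thesis
  proof (cases "x = 0")
    case True
    with assms have "\<alpha> > 0" by auto
    have "\<alpha> * (\<alpha> - 1) * (x powr \<alpha> - 1 - \<alpha> * (x - 1)) = \<alpha> * (\<alpha> - 1) * (\<alpha> - 1)"
      using True by simp
    also have "\<dots> > 0" using \<open>\<alpha> > 0\<close> assms(2) by (auto simp add: zero_less_mult_iff mult_less_0_iff)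
    finally show ?thesis .
  next
    case False
    with assms have xp: "x > 0" by auto
    have key: "\<alpha> * (\<alpha> - 1) * (g' z * (z - 1)) > 0" if "z > 0" "z \<noteq> 1" for z
    proof -
      have "(\<alpha> - 1) * (z powr (\<alpha> - 1) - 1) * (z - 1) > 0"
        using powr_sign_aux[OF that, of "\<alpha> - 1"] assms by simp
      moreover have "\<alpha> * \<alpha> > 0" using assms by (simp add: not_square_less_zero order_less_le)
      ultimately have "(\<alpha> * \<alpha>) * ((\<alpha> - 1) * (z powr (\<alpha> - 1) - 1) * (z - 1)) > 0"
        by (rule mult_pos_pos[rotated])
      then show ?thesis unfolding g'_def by (simp add: algebra_simps)
    qed
    show ?thesis
    proof (cases "x < 1")
      case True
      obtain z where z: "z > x" "z < 1" "g 1 - g x = (1 - x) * g' z"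
        using MVT2[OF True, of g g'] D xp by force
      have "g 1 = 0" unfolding g_def by simp
      have "\<alpha> * (\<alpha> - 1) * (g' z * (z - 1)) > 0" using key[of z] z xp by simp
      then have "\<alpha> * (\<alpha> - 1) * g' z < 0" using z by (simp add: zero_less_mult_iff mult_less_0_iff)
      moreover have gx: "g x = - ((1 - x) * g' z)" using z \<open>g 1 = 0\<close> by simp
      have "\<alpha> * (\<alpha> - 1) * g x = (1 - x) * (- (\<alpha> * (\<alpha> - 1) * g' z))"
        unfolding gx by (simp add: algebra_simps)
      moreover have "(1 - x) * (- (\<alpha> * (\<alpha> - 1) * g' z)) > 0"
        using \<open>\<alpha> * (\<alpha> - 1) * g' z < 0\<close> True by (simp add: mult_pos_neg)
      ultimately have "\<alpha> * (\<alpha> - 1) * g x > 0" by simp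
      then show ?thesis unfolding g_def by simp
    next
      case False
      then have x1: "1 < x" using assms by simp
      obtain z where z: "z > 1" "z < x" "g x - g 1 = (x - 1) * g' z"
        using MVT2[OF x1, of g g'] D by force
      have "g 1 = 0" unfolding g_def by simp
      have "\<alpha> * (\<alpha> - 1) * (g' z * (z - 1)) > 0" using key[of z] z by simp
      then have "(\<alpha> * (\<alpha> - 1) * g' z) * (z - 1) > 0" by (simp add: mult.assoc)
      then have "\<alpha> * (\<alpha> - 1) * g' z > 0" using z by (metis zero_less_mult_pos2 diff_gt_0_iff_gt)
      then have "\<alpha> * (\<alpha> - 1) * g' z * (x - 1) > 0" using x1 by simp
      moreover have gx: "g x = (x - 1) * g' z" using z \<open>g 1 = 0\<close> by simp
      ultimately have "\<alpha> * (\<alpha> - 1) * g x > 0" unfolding gx by (simp add: algebra_simps)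
      then show ?thesis unfolding g_def by simp
    qed
  qed
qed


lemma tangent_scaled:
  fixes s l \<alpha> :: real
  assumes "\<alpha> \<noteq> 0" "\<alpha> \<noteq> 1" "l > 0" "s > 0 \<or> (s = 0 \<and> \<alpha> > 0)"
  shows "\<alpha> * (\<alpha> - 1) * (s powr \<alpha> - l powr \<alpha> - \<alpha> * l powr (\<alpha> - 1) * (s - l)) \<ge> 0"
    and "s \<noteq> l \<Longrightarrow> \<alpha> * (\<alpha> - 1) * (s powr \<alpha> - l powr \<alpha> - \<alpha> * l powr (\<alpha> - 1) * (s - l)) > 0"
proof -
  define x where "x = s / l"
  have sx: "s = l * x" using assms(3) unfolding x_def by simp
  have x: "x > 0 \<or> (x = 0 \<and> \<alpha> > 0)" using assms(3,4) unfolding x_def by auto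
  have e1: "s powr \<alpha> = l powr \<alpha> * x powr \<alpha>"
    using x assms(3) sx by (auto simp: powr_mult)
  have "l powr (\<alpha> - 1) * (s - l) = l powr \<alpha> * (x - 1)"
    using assms(3) sx by (simp add: powr_diff field_simps)
  then have e2: "\<alpha> * l powr (\<alpha> - 1) * (s - l) = \<alpha> * (l powr \<alpha> * (x - 1))"
    by (simp add: mult.assoc)
  have eq: "\<alpha> * (\<alpha> - 1) * (s powr \<alpha> - l powr \<alpha> - \<alpha> * l powr (\<alpha> - 1) * (s - l))
     = l powr \<alpha> * (\<alpha> * (\<alpha> - 1) * (x powr \<alpha> - 1 - \<alpha> * (x - 1)))"
    unfolding e1 e2 by (simp add: algebra_simps)
  have lp: "l powr \<alpha> > 0" using assms(3) by simp
  have strict: "\<alpha> * (\<alpha> - 1) * (x powr \<alpha> - 1 - \<alpha> * (x - 1)) > 0" if "x \<noteq> 1"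
    using tangent_strict[OF assms(1,2) x that] .
  show "s \<noteq> l \<Longrightarrow> \<alpha> * (\<alpha> - 1) * (s powr \<alpha> - l powr \<alpha> - \<alpha> * l powr (\<alpha> - 1) * (s - l)) > 0"
  proof -
    assume "s \<noteq> l"
    then have "x \<noteq> 1" using sx by auto
    then show ?thesis unfolding eq using strict lp by simp
  qed
  show "\<alpha> * (\<alpha> - 1) * (s powr \<alpha> - l powr \<alpha> - \<alpha> * l powr (\<alpha> - 1) * (s - l)) \<ge> 0"
  proof (cases "x = 1")
    case True then show ?thesis unfolding eq by simp
  next
    case False then show ?thesis unfolding eq using strict lp by simp
  qed
qed


lemma set_nn_integral_pos:
  fixes f :: "'b::euclidean_space \<Rightarrow> ennreal"
  assumes U: "U \<in> sets borel" and f: "f \<in> borel_measurable (restrict_space lborel U)"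
    and S: "S \<in> sets borel" "S \<subseteq> U" and pos: "\<forall>u\<in>S. f u > 0" and Sp: "emeasure lborel S > 0"
  shows "(\<integral>\<^sup>+u\<in>U. f u \<partial>lborel) > 0"
proof (rule ccontr)
  have sp: "U \<inter> space lborel \<in> sets lborel" using U by simp
  assume "\<not> ?thesis"
  then have "(\<integral>\<^sup>+u\<in>U. f u \<partial>lborel) = 0" by (simp add: not_less)
  then have "(\<integral>\<^sup>+u. f u \<partial>restrict_space lborel U) = 0" by (simp add: nn_integral_restrict_space[OF sp])
  then have "AE u in restrict_space lborel U. f u = 0" using nn_integral_0_iff_AE[OF f] by simp
  then have "AE u in lborel. u \<in> U \<longrightarrow> f u = 0" by (simp add: AE_restrict_space_iff[OF sp])
  then have "AE u in lborel. u \<notin> S" using pos S(2) by (auto elim!: eventually_mono)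
  then have "S \<in> null_sets lborel" using AE_iff_null_sets S(1) by (metis sets_lborel)
  then show False using Sp by auto
qed

lemma core_ineq:
  fixes \<rho> q :: "'b::euclidean_space \<Rightarrow> real" and \<alpha> :: real and U :: "'b set"
  assumes U: "U \<in> sets borel" and a0: "\<alpha> \<noteq> 0" and a1: "\<alpha> \<noteq> 1"
    and rho: "\<rho> \<in> Lpow \<alpha> U"
    and q: "q \<in> borel_measurable (restrict_space borel U)"
    and Cfin: "(\<integral>\<^sup>+u\<in>U. ennreal (exp (- (\<alpha> * q u))) \<partial>lborel) < \<top>"
    and A_def: "A = (\<integral>\<^sup>+u\<in>U. ennreal (\<rho> u * exp ((1 - \<alpha>) * q u)) \<partial>lborel)"
    and B_def: "B = ( \<integral>\<^sup>+u\<in>{u\<in>U. \<rho> u > 0}. ennreal (\<rho> u powr \<alpha>) \<partial>lborel)"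
    and C_def: "C = (\<integral>\<^sup>+u\<in>U. ennreal (exp (- (\<alpha> * q u))) \<partial>lborel)"
    and l_def: "l = (enn2real B / enn2real C) powr (1 / \<alpha>)"
  shows "0 < enn2real B \<and> B = ennreal (enn2real B) \<and> 0 < enn2real C \<and> C = ennreal (enn2real C)
    \<and> (\<alpha> < 1 \<longrightarrow> ennreal (l * enn2real C) \<le> A)
    \<and> (\<alpha> > 1 \<longrightarrow> A \<le> ennreal (l * enn2real C))
    \<and> (A = ennreal (l * enn2real C) \<longrightarrow> (AE u in lborel. u \<in> U \<longrightarrow> \<rho> u = l * exp (- q u)))"
proof -
  define M where "M = restrict_space lborel U"
  have sp: "U \<inter> space lborel \<in> sets lborel" using U by simp
  have RS: "(\<integral>\<^sup>+u\<in>U. f u \<partial>lborel) = (\<integral>\<^sup>+u. f u \<partial>M)" for f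
    unfolding M_def by (simp add: nn_integral_restrict_space[OF sp])
  have spM: "space M = U" unfolding M_def using U by simp
  have setsM: "sets M = sets (restrict_space borel U)"
    unfolding M_def by (rule sets_restrict_space_cong) simp
  from rho have rho_m': "\<rho> \<in> borel_measurable (restrict_space borel U)"
    and rho_nn: "\<forall>u\<in>U. 0 \<le> \<rho> u"
    and rho_int: "(\<integral>\<^sup>+u\<in>U. ennreal (\<rho> u) \<partial>lborel) = 1"
    and Lfin: "(\<integral>\<^sup>+u\<in>U. pow_enn (\<rho> u) \<alpha> \<partial>lborel) < \<top>"
    unfolding Lpow_def prob_density_on_def by auto
  have rho_m[measurable]: "\<rho> \<in> borel_measurable M"
    using rho_m' measurable_cong_sets[OF setsM refl] by blast
  have q_m[measurable]: "q \<in> borel_measurable M"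
    using q measurable_cong_sets[OF setsM refl] by blast
  define P where "P = {u\<in>U. \<rho> u > 0}"
  have P_sets: "P \<in> sets borel"
  proof -
    have "{u \<in> space M. \<rho> u > 0} \<in> sets M" by measurable
    then have "P \<in> sets (restrict_space lborel U)" unfolding P_def M_def[symmetric] spM by simp
    then show ?thesis using sets_restrict_space_iff[OF sp] by auto
  qed
  have PU: "P \<subseteq> U" unfolding P_def by auto
  have P_pos: "emeasure lborel P > 0"
  proof (rule ccontr)
    assume "\<not> ?thesis"
    then have "P \<in> null_sets lborel" using P_sets by (simp add: null_sets_def)
    then have ae: "AE u in lborel. u \<notin> P" by (rule AE_not_in)
    have "(\<integral>\<^sup>+u\<in>U. ennreal (\<rho> u) \<partial>lborel) = (\<integral>\<^sup>+u. 0 \<partial>(lborel::'b measure))"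
      apply (rule nn_integral_cong_AE)
      apply (rule eventually_mono[OF ae])
      using rho_nn unfolding P_def by (auto simp: indicator_def)
    then show False using rho_int by simp
  qed
  have B_U: "B = (\<integral>\<^sup>+u\<in>U. ennreal (\<rho> u powr \<alpha>) \<partial>lborel)"
    unfolding B_def
    apply (rule nn_integral_cong)
    using rho_nn by (auto simp: indicator_def)
  have "B \<le> (\<integral>\<^sup>+u\<in>U. pow_enn (\<rho> u) \<alpha> \<partial>lborel)"
    unfolding B_U
    apply (rule nn_integral_mono)
    using rho_nn by (auto simp: indicator_def pow_enn_def)
  then have B_fin: "B < \<top>" using Lfin by simp
  have B_pos: "B > 0"
    unfolding B_U
    apply (rule set_nn_integral_pos[OF U _ P_sets PU _ P_pos])
    unfolding M_def[symmetric] apply measurable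
    unfolding P_def by auto
  have C_pos: "C > 0"
    unfolding C_def
    apply (rule set_nn_integral_pos[OF U _ P_sets PU _ P_pos])
    unfolding M_def[symmetric] by measurable
  have C_fin: "C < \<top>" using Cfin unfolding C_def .
  define Br where "Br = enn2real B"
  define Cr where "Cr = enn2real C"
  have B_eq: "B = ennreal Br" unfolding Br_def using B_fin by simp
  have C_eq: "C = ennreal Cr" unfolding Cr_def using C_fin by simp
  have Br_pos: "Br > 0" using B_pos B_fin unfolding Br_def by (simp add: enn2real_positive_iff)
  have Cr_pos: "Cr > 0" using C_pos C_fin unfolding Cr_def by (simp add: enn2real_positive_iff)
  have l_pos: "l > 0" unfolding l_def Br_def[symmetric] Cr_def[symmetric] using Br_pos Cr_pos by simp
  have l_alpha: "l powr \<alpha> = Br / Cr"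
    unfolding l_def Br_def[symmetric] Cr_def[symmetric] using a0 Br_pos Cr_pos by (simp add: powr_powr)
  define sf where "sf u = \<rho> u * exp (q u)" for u
  define w where "w u = exp (- (\<alpha> * q u))" for u
  have [measurable]: "sf \<in> borel_measurable M" "w \<in> borel_measurable M"
    unfolding sf_def w_def by measurable
  have w_pos: "w u > 0" for u unfolding w_def by simp
  have sf_nn: "u \<in> U \<Longrightarrow> sf u \<ge> 0" for u unfolding sf_def using rho_nn by simp
  have A_M: "A = (\<integral>\<^sup>+u. ennreal (sf u * w u) \<partial>M)"
    unfolding A_def RS
    apply (rule nn_integral_cong)
    unfolding sf_def w_def by (simp add: exp_add[symmetric] algebra_simps)
  have B_M: "B = (\<integral>\<^sup>+u. ennreal (sf u powr \<alpha> * w u) \<partial>M)"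
    unfolding B_U RS
  proof (rule nn_integral_cong)
    fix u assume "u \<in> space M"
    then have "\<rho> u \<ge> 0" using rho_nn spM by auto
    show "ennreal (\<rho> u powr \<alpha>) = ennreal (sf u powr \<alpha> * w u)"
    proof (cases "\<rho> u = 0")
      case True then show ?thesis unfolding sf_def by simp
    next
      case False
      then have "\<rho> u > 0" using \<open>\<rho> u \<ge> 0\<close> by simp
      then have "sf u powr \<alpha> = \<rho> u powr \<alpha> * exp (\<alpha> * q u)"
        unfolding sf_def by (simp add: powr_mult exp_powr_real mult.commute)
      then show ?thesis unfolding w_def by (simp add: exp_add[symmetric] mult.assoc)
    qed
  qed
  have C_M: "C = (\<integral>\<^sup>+u. ennreal (w u) \<partial>M)"
    unfolding C_def RS w_def ..
  have valid: "AE u in M. sf u > 0 \<or> (sf u = 0 \<and> \<alpha> > 0)"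
  proof (cases "\<alpha> > 0")
    case True
    show ?thesis
      apply (rule AE_I2)
      using sf_nn spM True by force
  next
    case False
    with a0 have an: "\<alpha> < 0" by simp
    define N where "N = {u\<in>U. \<rho> u \<le> 0}"
    have N_sets: "N \<in> sets borel"
    proof -
      have "{u \<in> space M. \<rho> u \<le> 0} \<in> sets M" by measurable
      then have "N \<in> sets (restrict_space lborel U)" unfolding N_def M_def[symmetric] spM by simp
      then show ?thesis using sets_restrict_space_iff[OF sp] by auto
    qed
    have "(\<integral>\<^sup>+u. \<top> * indicator N u \<partial>lborel) \<le> (\<integral>\<^sup>+u\<in>U. pow_enn (\<rho> u) \<alpha> \<partial>lborel)"
      apply (rule nn_integral_mono)
      using an unfolding N_def by (auto simp: indicator_def pow_enn_def)
    then have "\<top> * emeasure lborel N < \<top>"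
      using Lfin N_sets by (simp add: nn_integral_cmult_indicator)
    then have "emeasure lborel N = 0" by (simp add: ennreal_top_mult split: if_splits)
    then have "N \<in> null_sets lborel" using N_sets by (simp add: null_sets_def)
    then have "AE u in lborel. u \<notin> N" by (rule AE_not_in)
    then have "AE u in M. u \<notin> N" unfolding M_def using AE_restrict_space_iff[OF sp]
      by (auto elim: eventually_mono)
    with AE_space[of M] show ?thesis
      by eventually_elim (auto simp: N_def sf_def spM zero_less_mult_iff)
  qed
  have ll: "l powr (\<alpha> - 1) * l = l powr \<alpha>" using l_pos by (simp add: powr_diff)
  define T where "T u = sf u powr \<alpha> - l powr \<alpha> - \<alpha> * l powr (\<alpha> - 1) * (sf u - l)" for u
  have tan_ae: "AE u in M. \<alpha> * (\<alpha> - 1) * T u \<ge> 0"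
    using valid by eventually_elim (unfold T_def, rule tangent_scaled(1)[OF a0 a1 l_pos])
  have tan_strict: "AE u in M. sf u \<noteq> l \<longrightarrow> \<alpha> * (\<alpha> - 1) * T u > 0"
    using valid by eventually_elim (unfold T_def, auto intro: tangent_scaled(2)[OF a0 a1 l_pos])
  have A_fin: "A < \<top>" if a_gt: "\<alpha> > 1"
  proof -
    define c1 where "c1 = \<alpha> * l powr (\<alpha> - 1)"
    define c2 where "c2 = (\<alpha> - 1) * l powr \<alpha>"
    have c1: "c1 > 0" unfolding c1_def using a_gt l_pos by simp
    have c2: "c2 \<ge> 0" unfolding c2_def using a_gt by simp
    have "AE u in M. ennreal c1 * ennreal (sf u * w u) \<le> ennreal (sf u powr \<alpha> * w u) + ennreal c2 * ennreal (w u)"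
      using tan_ae valid
    proof eventually_elim
      case (elim u)
      have sfn: "sf u \<ge> 0" using elim(2) by auto
      have "\<alpha> * (\<alpha> - 1) > 0" using a_gt by simp
      then have "T u \<ge> 0" using elim by (simp add: zero_le_mult_iff)
      then have "c1 * sf u \<le> sf u powr \<alpha> + c2"
        unfolding T_def c1_def c2_def using ll by (simp add: algebra_simps)
      then have i1: "c1 * sf u * w u \<le> (sf u powr \<alpha> + c2) * w u"
        using w_pos[of u] by (simp add: mult_right_mono)
      have i2: "c1 * (sf u * w u) \<le> sf u powr \<alpha> * w u + c2 * w u"
        using i1 by (simp only: distrib_right mult.assoc)
      have e1: "ennreal c1 * ennreal (sf u * w u) = ennreal (c1 * (sf u * w u))"
        using c1 sfn w_pos[of u] by (simp add: ennreal_mult)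
      have e2: "ennreal (sf u powr \<alpha> * w u) + ennreal c2 * ennreal (w u) = ennreal (sf u powr \<alpha> * w u + c2 * w u)"
        using c2 w_pos[of u] by (simp add: ennreal_mult ennreal_plus)
      show ?case unfolding e1 e2 using i2 by (rule ennreal_leI)
    qed
    then have "(\<integral>\<^sup>+u. ennreal c1 * ennreal (sf u * w u) \<partial>M)
        \<le> (\<integral>\<^sup>+u. ennreal (sf u powr \<alpha> * w u) + ennreal c2 * ennreal (w u) \<partial>M)"
      by (rule nn_integral_mono_AE)
    also have "\<dots> = B + ennreal c2 * C"
      unfolding B_M C_M by (simp add: nn_integral_add nn_integral_cmult)
    finally have "ennreal c1 * A \<le> B + ennreal c2 * C"
      unfolding A_M by (simp add: nn_integral_cmult)
    moreover have "B + ennreal c2 * C < \<top>" using B_fin C_fin by (simp add: ennreal_mult_less_top)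
    ultimately have "ennreal c1 * A < \<top>" using order.strict_trans1 by blast
    then show ?thesis using c1 by (auto simp add: ennreal_mult_less_top)
  qed
  have main: "(\<alpha> - 1) * (enn2real A - l * Cr) \<le> 0 \<and> (enn2real A = l * Cr \<longrightarrow> (AE u in M. sf u = l))"
    if Afin: "A < \<top>"
  proof -
    define Ar where "Ar = enn2real A"
    have A_eq: "A = ennreal Ar" unfolding Ar_def using Afin by simp
    have sfw_nn: "AE u in M. 0 \<le> sf u * w u"
      using AE_space[of M] by eventually_elim (simp add: sf_nn spM w_pos less_imp_le)
    have int1: "integrable M (\<lambda>u. sf u * w u)"
      by (rule integrableI_nn_integral_finite[where x=Ar]) (use sfw_nn A_M A_eq in auto)
    have int2: "integrable M (\<lambda>u. sf u powr \<alpha> * w u)"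
      by (rule integrableI_nn_integral_finite[where x=Br]) (use B_M B_eq w_pos in \<open>auto intro!: AE_I2 simp: less_imp_le\<close>)
    have int3: "integrable M w"
      by (rule integrableI_nn_integral_finite[where x=Cr]) (use C_M C_eq w_pos in \<open>auto intro!: AE_I2 simp: less_imp_le\<close>)
    have I1: "integral\<^sup>L M (\<lambda>u. sf u * w u) = Ar"
      using integral_eq_nn_integral[of "\<lambda>u. sf u * w u" M] sfw_nn A_M Ar_def by simp
    have I2: "integral\<^sup>L M (\<lambda>u. sf u powr \<alpha> * w u) = Br"
      using integral_eq_nn_integral[of "\<lambda>u. sf u powr \<alpha> * w u" M] B_M Br_def w_pos
      by (simp add: less_imp_le)
    have I3: "integral\<^sup>L M w = Cr"
      using integral_eq_nn_integral[of w M] C_M Cr_def w_pos by (simp add: less_imp_le)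
    define k1 where "k1 = \<alpha> * (\<alpha> - 1)"
    define k2 where "k2 = \<alpha> * (\<alpha> - 1) * (1 - \<alpha>) * l powr \<alpha>"
    define k3 where "k3 = \<alpha> * \<alpha> * (\<alpha> - 1) * l powr (\<alpha> - 1)"
    define h where "h u = k1 * (sf u powr \<alpha> * w u) - k2 * w u - k3 * (sf u * w u)" for u
    have lm: "l powr (\<alpha> - 1) = l powr \<alpha> / l" using l_pos by (simp add: powr_diff)
    have hT: "h u = w u * (\<alpha> * (\<alpha> - 1) * T u)" for u
      unfolding h_def T_def k1_def k2_def k3_def lm using l_pos by (simp add: field_simps)
    have int_h: "integrable M h" unfolding h_def using int1 int2 int3 by simp
    have Ih: "integral\<^sup>L M h = k1 * Br - k2 * Cr - k3 * Ar"
      unfolding h_def using int1 int2 int3 I1 I2 I3 by simp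
    have h_nn: "AE u in M. 0 \<le> h u"
      using tan_ae by eventually_elim (simp add: hT w_pos less_imp_le)
    have kb: "k1 * Br = \<alpha> * (\<alpha> - 1) * l powr \<alpha> * Cr" unfolding k1_def l_alpha using Cr_pos by simp
    have Ih2: "integral\<^sup>L M h = (\<alpha> * \<alpha> * l powr (\<alpha> - 1)) * ((\<alpha> - 1) * (l * Cr - Ar))"
      unfolding Ih kb k2_def k3_def lm using l_pos by (simp add: field_simps)
    have Kp: "\<alpha> * \<alpha> * l powr (\<alpha> - 1) > 0" using a0 l_pos by (simp add: not_square_less_zero order_less_le)
    have "0 \<le> integral\<^sup>L M h" using h_nn by (rule integral_nonneg_AE)
    then have "(\<alpha> - 1) * (l * Cr - Ar) \<ge> 0" unfolding Ih2 using Kp by (simp add: zero_le_mult_iff)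
    then have ineq: "(\<alpha> - 1) * (Ar - l * Cr) \<le> 0" by (simp add: algebra_simps)
    have eqc: "AE u in M. sf u = l" if "Ar = l * Cr"
    proof -
      have "integral\<^sup>L M h = 0" unfolding Ih2 using that by simp
      then have "AE u in M. h u = 0" using integral_nonneg_eq_0_iff_AE[OF int_h h_nn] by simp
      then show ?thesis using tan_strict
        by eventually_elim (auto simp: hT w_pos[THEN less_imp_neq, symmetric])
    qed
    show ?thesis using ineq eqc unfolding Ar_def by simp
  qed
  have rho_eq: "AE u in lborel. u \<in> U \<longrightarrow> \<rho> u = l * exp (- q u)" if "AE u in M. sf u = l"
  proof -
    have "AE u in M. \<rho> u = l * exp (- q u)"
      using that by eventually_elim (simp add: sf_def exp_minus field_simps)
    then show ?thesis unfolding M_def by (simp add: AE_restrict_space_iff[OF sp])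
  qed
  show ?thesis
  proof (intro conjI impI)
    show "0 < enn2real B" "B = ennreal (enn2real B)" "0 < enn2real C" "C = ennreal (enn2real C)"
      using Br_pos B_eq Cr_pos C_eq unfolding Br_def Cr_def by auto
  next
    assume a: "\<alpha> < 1"
    show "ennreal (l * enn2real C) \<le> A"
    proof (cases "A < \<top>")
      case True
      then have "(\<alpha> - 1) * (enn2real A - l * Cr) \<le> 0" using main by blast
      then have "l * Cr \<le> enn2real A" using a by (simp add: mult_le_0_iff)
      then show ?thesis using True unfolding Cr_def by (metis ennreal_enn2real ennreal_leI less_top)
    next
      case False then show ?thesis by (simp add: top_unique not_less)
    qed
  next
    assume a: "\<alpha> > 1"
    then have Af: "A < \<top>" by (rule A_fin)
    then have "(\<alpha> - 1) * (enn2real A - l * Cr) \<le> 0" using main by blast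
    then have "enn2real A \<le> l * Cr" using a by (simp add: mult_le_0_iff)
    then show "A \<le> ennreal (l * enn2real C)" using Af unfolding Cr_def
      by (metis ennreal_enn2real ennreal_leI less_top)
  next
    assume eq: "A = ennreal (l * enn2real C)"
    then have Af: "A < \<top>" by simp
    have "enn2real A = l * Cr" using eq l_pos Cr_pos unfolding Cr_def by simp
    then have "AE u in M. sf u = l" using main[OF Af] by blast
    then show "AE u in lborel. u \<in> U \<longrightarrow> \<rho> u = l * exp (- q u)" by (rule rho_eq)
  qed
qed




lemma ln_enn_ennreal: "r > 0 \<Longrightarrow> ln_enn (ennreal r) = ereal (ln r)"
  unfolding ln_enn_def by auto

lemma exp_e_ereal: "exp_e (ereal r) = ennreal (exp r)"
  unfolding exp_e_def by auto

lemma ln_enn_measurable[measurable]: "ln_enn \<in> borel_measurable borel"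
  unfolding ln_enn_def by measurable

lemma exp_e_measurable[measurable]: "exp_e \<in> borel_measurable borel"
  unfolding exp_e_def by measurable

lemma cost_ge_pos:
  assumes "\<eta> > 0" "ennreal (exp (\<eta> * a)) \<le> R"
  shows "ereal a \<le> ereal (1 / \<eta>) * ln_enn R"
proof (cases "R = \<top>")
  case True then show ?thesis using assms by (simp add: ln_enn_def)
next
  case False
  then obtain r where r: "R = ennreal r" "r \<ge> 0" by (cases R) auto
  with assms have "exp (\<eta> * a) \<le> r" by (simp add: ennreal_le_iff2)
  moreover have rp: "r > 0" using calculation exp_gt_zero[of "\<eta> * a"] by linarith
  ultimately have "\<eta> * a \<le> ln r" by (metis exp_le_cancel_iff exp_ln)
  then have "a \<le> ln r / \<eta>" using assms(1) by (simp add: field_simps)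
  then show ?thesis using r rp by (simp add: ln_enn_ennreal)
qed

lemma cost_ge_neg:
  assumes "\<eta> < 0" "R \<le> ennreal (exp (\<eta> * a))"
  shows "ereal a \<le> ereal (1 / \<eta>) * ln_enn R"
proof (cases "R = 0")
  case True then show ?thesis using assms by (simp add: ln_enn_def)
next
  case False
  have "R \<noteq> \<top>" using assms(2) by (auto simp: top_unique)
  then obtain r where r: "R = ennreal r" "r \<ge> 0" by (cases R) auto
  with False have rp: "r > 0" by auto
  with assms r have "r \<le> exp (\<eta> * a)" by (simp add: ennreal_le_iff2)
  then have "ln r \<le> \<eta> * a" using rp by (metis exp_le_cancel_iff exp_ln)
  then have "a \<le> ln r / \<eta>" using assms(1) by (simp add: field_simps)
  then show ?thesis using r rp by (simp add: ln_enn_ennreal)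
qed

lemma cost_eq:
  assumes "\<eta> \<noteq> 0"
  shows "ereal (1 / \<eta>) * ln_enn (ennreal (exp (\<eta> * a))) = ereal a"
  using assms by (simp add: ln_enn_ennreal)

lemma cost_eq_inv:
  assumes "\<eta> \<noteq> 0" "ereal (1 / \<eta>) * ln_enn R = ereal a"
  shows "R = ennreal (exp (\<eta> * a))"
proof -
  have R0: "R \<noteq> 0" using assms by (auto simp: ln_enn_def split: if_splits)
  have Rt: "R \<noteq> \<top>" using assms by (auto simp: ln_enn_def split: if_splits)
  then obtain r where r: "R = ennreal r" "r \<ge> 0" by (cases R) auto
  with R0 have rp: "r > 0" by auto
  with assms r have "ln r / \<eta> = a" by (simp add: ln_enn_ennreal)
  then have "ln r = \<eta> * a" using assms(1) by (simp add: field_simps)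
  then have "r = exp (\<eta> * a)" using rp by (metis exp_ln)
  then show ?thesis using r by simp
qed

lemma value_identity:
  fixes Br Cr \<eta> :: real
  assumes "Br > 0" "Cr > 0" "\<eta> \<noteq> 0" "\<eta> \<noteq> 1"
  shows "exp (\<eta> * (- (ln Br / ((1 - \<eta>) * \<eta>)))) * ((Br / Cr) powr (1 / (1 - \<eta>)) * Cr)
         = exp (\<eta> * (ln Cr / (\<eta> - 1)))"
proof -
  have a: "1 - \<eta> \<noteq> 0" using assms by simp
  have e: "(Br / Cr) powr (1 / (1 - \<eta>)) * Cr = exp (ln Br / (1 - \<eta>) - ln Cr / (1 - \<eta>) + ln Cr)"
    using assms by (simp add: powr_def ln_div exp_add diff_divide_distrib)
  then have "exp (\<eta> * (- (ln Br / ((1 - \<eta>) * \<eta>)))) * ((Br / Cr) powr (1 / (1 - \<eta>)) * Cr)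
     = exp (\<eta> * (- (ln Br / ((1 - \<eta>) * \<eta>))) + (ln Br / (1 - \<eta>) - ln Cr / (1 - \<eta>) + ln Cr))"
    by (subst e) (rule exp_add[symmetric])
  also have "\<eta> * (- (ln Br / ((1 - \<eta>) * \<eta>))) + (ln Br / (1 - \<eta>) - ln Cr / (1 - \<eta>) + ln Cr)
      = \<eta> * (ln Cr / (\<eta> - 1))"
  proof -
    have e1: "\<eta> * (- (ln Br / ((1 - \<eta>) * \<eta>))) = - (ln Br / (1 - \<eta>))"
      using assms(3) a by (simp add: field_simps)
    have a2: "\<eta> - 1 \<noteq> 0" using assms by simp
    have e2: "ln Cr - ln Cr / (1 - \<eta>) = \<eta> * (ln Cr / (\<eta> - 1))"
      using a a2 by (simp add: field_simps)
    show ?thesis using e1 e2 by linarith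
  qed
  finally show ?thesis .
qed




locale rs_setting =
  fixes \<eta> :: real and T :: nat
    and X :: "'a::euclidean_space set" and U :: "'b::euclidean_space set"
    and K :: "'a \<Rightarrow> 'b \<Rightarrow> 'a measure"
    and c :: "nat \<Rightarrow> 'a \<Rightarrow> 'b \<Rightarrow> real" and cT :: "'a \<Rightarrow> real"
  assumes eta: "\<eta> \<noteq> 0" "\<eta> \<noteq> 1"
    and T_pos: "T > 0"
    and X_meas: "X \<in> sets borel"
    and U_meas: "U \<in> sets borel" and U_pos: "emeasure lborel U > 0"
    and K_kernel: "(\<lambda>(x, u). K x u) \<in> restrict_space borel (X \<times> U) \<rightarrow>\<^sub>M prob_algebra borel"
    and K_X: "\<forall>x\<in>X. \<forall>u\<in>U. emeasure (K x u) X = 1"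
    and c_meas: "\<forall>t<T. (\<lambda>(x, u). c t x u) \<in> borel_measurable (restrict_space borel (X \<times> U))"
    and cT_meas: "cT \<in> borel_measurable (restrict_space borel X)"
    and c_bdd: "\<forall>t<T. \<exists>b. \<forall>x\<in>X. \<forall>u\<in>U. b \<le> c t x u"
    and cT_bdd: "\<exists>b. \<forall>x\<in>X. b \<le> cT x"
    and Q_finite: "\<forall>t<T. \<forall>x\<in>X. \<forall>u\<in>U. \<bar>Q_fn \<eta> T X U K c cT t x u\<bar> \<noteq> \<infinity>"
    and int1: "\<forall>t<T. \<forall>x\<in>X. (\<integral>\<^sup>+u\<in>U. exp_e (- Q_fn \<eta> T X U K c cT t x u) \<partial>lborel) < \<top>"
    and int2: "\<forall>t<T. \<forall>x\<in>X.
                 (\<integral>\<^sup>+u\<in>U. exp_e (- (ereal (1 - \<eta>) * Q_fn \<eta> T X U K c cT t x u)) \<partial>lborel) < \<top>"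
begin

abbreviation "Q \<equiv> Q_fn \<eta> T X U K c cT"
abbreviation "V \<equiv> value_fn \<eta> T X U K c cT"
abbreviation "ps \<equiv> opt_policy \<eta> T X U K c cT"
abbreviation "R \<equiv> risk_obj \<eta> U K c cT"

definition "qr t x u = real_of_ereal (Q t x u)"
definition "vr t x = real_of_ereal (V t x)"

lemma XU_sets: "X \<times> U \<in> sets borel"
  using pair_measureI[OF X_meas U_meas] unfolding borel_prod .

lemma K_prob: assumes "x \<in> X" "u \<in> U" shows "prob_space (K x u)" "sets (K x u) = sets borel"
proof -
  have "(\<lambda>(x, u). K x u) (x, u) \<in> space (prob_algebra borel)"
    using measurable_space[OF K_kernel, of "(x, u)"] assms XU_sets by (simp add: space_restrict_space)
  then show "prob_space (K x u)" "sets (K x u) = sets borel" by (auto simp: space_prob_algebra)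
qed

lemma K_AE: assumes "x \<in> X" "u \<in> U" shows "AE y in K x u. y \<in> X"
proof -
  interpret prob_space "K x u" using K_prob[OF assms] by simp
  have "X \<in> events" using K_prob(2)[OF assms] X_meas by simp
  moreover have "prob X = 1" using K_X assms by (simp add: measure_def)
  ultimately show ?thesis using AE_in_set_eq_1 by simp
qed

lemma kernel_integral_measurable:
  assumes [measurable]: "g \<in> borel_measurable borel"
  shows "(\<lambda>(x, u). \<integral>\<^sup>+y. g y \<partial>K x u) \<in> borel_measurable (restrict_space borel (X \<times> U))"
proof -
  have L: "(\<lambda>(x, u). K x u) \<in> restrict_space borel (X \<times> U) \<rightarrow>\<^sub>M subprob_algebra borel"
    using K_kernel by (rule measurable_prob_algebraD)
  have "(\<lambda>p. integral\<^sup>N ((\<lambda>(x, u). K x u) p) ((\<lambda>p y. g y) p)) \<in> borel_measurable (restrict_space borel (X \<times> U))"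
    by (rule nn_integral_measurable_subprob_algebra2[OF _ L]) measurable
  then show ?thesis by (simp add: split_beta')
qed

lemma step_Q:
  assumes t: "t < T"
    and Vv: "\<forall>y\<in>X. V (Suc t) y = ereal (v y)"
    and vm: "v \<in> borel_measurable (restrict_space borel X)"
  shows "\<forall>x\<in>X. \<forall>u\<in>U. Q t x u = ereal (qr t x u)
            \<and> (\<integral>\<^sup>+y. ennreal (exp (\<eta> * v y)) \<partial>K x u) = ennreal (exp (\<eta> * (qr t x u - c t x u)))"
    and "(\<lambda>(x, u). qr t x u) \<in> borel_measurable (restrict_space borel (X \<times> U))"
proof -
  define v' where "v' y = (if y \<in> X then v y else 0)" for y
  have v'm[measurable]: "v' \<in> borel_measurable borel"
    using vm unfolding v'_def using measurable_restrict_space_iff[of X borel 0 borel v] X_meas by simp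
  define I' where "I' x u = (\<integral>\<^sup>+y. ennreal (exp (\<eta> * v' y)) \<partial>K x u)" for x u
  have key: "Q t x u = ereal (qr t x u) \<and> (\<integral>\<^sup>+y. ennreal (exp (\<eta> * v y)) \<partial>K x u) = ennreal (exp (\<eta> * (qr t x u - c t x u)))
       \<and> qr t x u = c t x u + ln (enn2real (I' x u)) / \<eta>"
    if x: "x \<in> X" and u: "u \<in> U" for x u
  proof -
    have ae: "AE y in K x u. y \<in> X" by (rule K_AE[OF x u])
    have J: "(\<integral>\<^sup>+y. exp_e (ereal \<eta> * V (Suc t) y) \<partial>K x u) = I' x u"
      unfolding I'_def by (rule nn_integral_cong_AE) (use ae in eventually_elim, simp add: Vv v'_def exp_e_ereal)
    have J2: "(\<integral>\<^sup>+y. ennreal (exp (\<eta> * v y)) \<partial>K x u) = I' x u"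
      unfolding I'_def by (rule nn_integral_cong_AE) (use ae in eventually_elim, simp add: v'_def)
    have Qe: "Q t x u = ereal (c t x u) + ereal (1 / \<eta>) * ln_enn (I' x u)"
      unfolding Q_fn_def J ..
    have fin: "\<bar>Q t x u\<bar> \<noteq> \<infinity>" using Q_finite t x u by simp
    have I0: "I' x u \<noteq> 0"
    proof
      assume "I' x u = 0"
      then have "Q t x u = ereal (c t x u) + ereal (1 / \<eta>) * (- \<infinity>)" unfolding Qe by (simp add: ln_enn_def)
      moreover have "ereal (1 / \<eta>) * (- \<infinity>) = \<infinity> \<or> ereal (1 / \<eta>) * (- \<infinity>) = - \<infinity>"
        using eta by (cases "\<eta> > 0") (simp_all add: not_less)
      ultimately show False using fin by auto
    qed
    have It: "I' x u \<noteq> \<top>"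
    proof
      assume "I' x u = \<top>"
      then have "Q t x u = ereal (c t x u) + ereal (1 / \<eta>) * \<infinity>" unfolding Qe by (simp add: ln_enn_def)
      moreover have "ereal (1 / \<eta>) * \<infinity> = \<infinity> \<or> ereal (1 / \<eta>) * \<infinity> = - \<infinity>"
        using eta by (cases "\<eta> > 0") (simp_all add: not_less)
      ultimately show False using fin by auto
    qed
    obtain r where r: "I' x u = ennreal r" "r > 0" using I0 It
      by (cases "I' x u") (auto simp: top_ennreal.rep_eq)
    have Qr: "Q t x u = ereal (c t x u + ln r / \<eta>)"
      unfolding Qe r using r(2) by (simp add: ln_enn_ennreal)
    then have qr: "qr t x u = c t x u + ln r / \<eta>" unfolding qr_def by simp
    have "\<eta> * (qr t x u - c t x u) = ln r" unfolding qr using eta by simp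
    then have "exp (\<eta> * (qr t x u - c t x u)) = r" using r(2) by simp
    then show ?thesis using Qr qr J2 r by simp
  qed
  then show "\<forall>x\<in>X. \<forall>u\<in>U. Q t x u = ereal (qr t x u)
            \<and> (\<integral>\<^sup>+y. ennreal (exp (\<eta> * v y)) \<partial>K x u) = ennreal (exp (\<eta> * (qr t x u - c t x u)))"
    by blast
  have cm[measurable]: "(\<lambda>(x, u). c t x u) \<in> borel_measurable (restrict_space borel (X \<times> U))"
    using c_meas t by blast
  have Im[measurable]: "(\<lambda>(x, u). I' x u) \<in> borel_measurable (restrict_space borel (X \<times> U))"
    unfolding I'_def by (rule kernel_integral_measurable) measurable
  have "(\<lambda>p. (\<lambda>(x, u). c t x u) p + ln (enn2real ((\<lambda>(x, u). I' x u) p)) / \<eta>) \<in> borel_measurable (restrict_space borel (X \<times> U))"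
    by measurable
  then show "(\<lambda>(x, u). qr t x u) \<in> borel_measurable (restrict_space borel (X \<times> U))"
    apply (rule measurable_cong[THEN iffD1, rotated])
    using key XU_sets by (auto simp: space_restrict_space)
qed

lemma fst_integral_measurable:
  fixes g :: "'a \<Rightarrow> 'b \<Rightarrow> ennreal"
  assumes g: "(\<lambda>(x, u). g x u) \<in> borel_measurable (restrict_space borel (X \<times> U))"
  shows "(\<lambda>x. \<integral>\<^sup>+u\<in>U. g x u \<partial>lborel) \<in> borel_measurable (restrict_space borel X)"
proof -
  define G where "G p = (if p \<in> X \<times> U then (case p of (x, u) \<Rightarrow> g x u) else 0)" for p
  have "G \<in> borel_measurable borel"
    using g unfolding G_def using measurable_restrict_space_iff[of "X \<times> U" borel 0 borel "\<lambda>(x, u). g x u"] XU_sets by simp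
  then have "G \<in> borel_measurable (lborel \<Otimes>\<^sub>M lborel)"
    unfolding lborel_prod by (simp add: measurable_lborel1)
  then have "(\<lambda>x. \<integral>\<^sup>+y. G (x, y) \<partial>lborel) \<in> borel_measurable (lborel :: 'a measure)"
    by (rule lborel.borel_measurable_nn_integral_fst)
  then have "(\<lambda>x. \<integral>\<^sup>+y. G (x, y) \<partial>lborel) \<in> borel_measurable (borel :: 'a measure)"
    by (simp add: measurable_lborel1)
  then have "(\<lambda>x. \<integral>\<^sup>+y. G (x, y) \<partial>lborel) \<in> borel_measurable (restrict_space borel X)"
    by (rule measurable_restrict_space1)
  then show ?thesis
    apply (rule measurable_cong[THEN iffD1, rotated])
    apply (rule nn_integral_cong)
    using X_meas by (auto simp: G_def indicator_def space_restrict_space)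
qed

lemma section_measurable:
  assumes f: "f \<in> borel_measurable (restrict_space borel (X \<times> U))" and x: "x \<in> X"
  shows "(\<lambda>u. f (x, u)) \<in> borel_measurable (restrict_space borel U)"
proof -
  have "(\<lambda>u. (x, u)) \<in> (borel :: 'b measure) \<rightarrow>\<^sub>M ((borel :: 'a measure) \<Otimes>\<^sub>M (borel :: 'b measure))"
    by measurable
  then have "(\<lambda>u. (x, u)) \<in> (borel :: 'b measure) \<rightarrow>\<^sub>M borel" unfolding borel_prod .
  then have "(\<lambda>u. (x, u)) \<in> restrict_space borel U \<rightarrow>\<^sub>M restrict_space borel (X \<times> U)"
    by (rule measurable_restrict_space3) (use x in auto)
  from measurable_comp[OF this f] show ?thesis by (simp add: comp_def)
qed

lemma fst_measurable_XU:
  "fst \<in> restrict_space borel (X \<times> U) \<rightarrow>\<^sub>M restrict_space borel X"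
proof -
  have "fst \<in> (borel :: ('a \<times> 'b) measure) \<rightarrow>\<^sub>M borel"
    unfolding borel_prod[symmetric] by measurable
  then show ?thesis by (rule measurable_restrict_space3) auto
qed

lemma exp_e_neg_ereal: "exp_e (- ereal r) = ennreal (exp (- r))"
  by (simp add: exp_e_ereal)

lemma ps_facts:
  assumes t: "t < T"
    and Qq: "\<forall>x\<in>X. \<forall>u\<in>U. Q t x u = ereal (qr t x u)"
    and qm: "(\<lambda>(x, u). qr t x u) \<in> borel_measurable (restrict_space borel (X \<times> U))"
  shows "\<forall>x\<in>X. Z_fn \<eta> T X U K c cT t x = (\<integral>\<^sup>+u\<in>U. ennreal (exp (- qr t x u)) \<partial>lborel)
            \<and> 0 < enn2real (Z_fn \<eta> T X U K c cT t x)
            \<and> Z_fn \<eta> T X U K c cT t x = ennreal (enn2real (Z_fn \<eta> T X U K c cT t x))"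
    and "\<forall>x\<in>X. (\<integral>\<^sup>+u\<in>U. exp_e (- (ereal (1 - \<eta>) * Q t x u)) \<partial>lborel)
               = (\<integral>\<^sup>+u\<in>U. ennreal (exp (- ((1 - \<eta>) * qr t x u))) \<partial>lborel)
            \<and> (\<integral>\<^sup>+u\<in>U. ennreal (exp (- ((1 - \<eta>) * qr t x u))) \<partial>lborel) < \<top>"
    and "\<forall>x u. ps t x u = exp (- qr t x u) / enn2real (Z_fn \<eta> T X U K c cT t x)"
    and "(\<lambda>(x, u). ps t x u) \<in> borel_measurable (restrict_space borel (X \<times> U))"
    and "\<forall>x\<in>X. ps t x \<in> Lpow (1 - \<eta>) U"
proof -
  have Zeq: "Z_fn \<eta> T X U K c cT t x = (\<integral>\<^sup>+u\<in>U. ennreal (exp (- qr t x u)) \<partial>lborel)" if x: "x \<in> X" for x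
    unfolding Z_fn_def by (rule nn_integral_cong) (use Qq x in \<open>auto simp: indicator_def exp_e_neg_ereal exp_e_ereal\<close>)
  have Ceq: "(\<integral>\<^sup>+u\<in>U. exp_e (- (ereal (1 - \<eta>) * Q t x u)) \<partial>lborel)
               = (\<integral>\<^sup>+u\<in>U. ennreal (exp (- ((1 - \<eta>) * qr t x u))) \<partial>lborel)" if x: "x \<in> X" for x
    by (rule nn_integral_cong) (use Qq x in \<open>auto simp: indicator_def exp_e_ereal\<close>)
  have Cfin: "(\<integral>\<^sup>+u\<in>U. ennreal (exp (- ((1 - \<eta>) * qr t x u))) \<partial>lborel) < \<top>" if x: "x \<in> X" for x
    using int2[rule_format, OF t x] unfolding Ceq[OF x] .
  have Zfin: "Z_fn \<eta> T X U K c cT t x < \<top>" if x: "x \<in> X" for x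
    using int1[rule_format, OF t x] unfolding Z_fn_def .
  have qsec: "(\<lambda>u. qr t x u) \<in> borel_measurable (restrict_space borel U)" if x: "x \<in> X" for x
    using section_measurable[OF qm x] by simp
  have Zpos: "Z_fn \<eta> T X U K c cT t x > 0" if x: "x \<in> X" for x
  proof -
    have "(\<lambda>u. ennreal (exp (- qr t x u))) \<in> borel_measurable (restrict_space lborel U)"
      using qsec[OF x] by (simp add: measurable_lborel1 cong: measurable_cong_sets)
    then show ?thesis unfolding Zeq[OF x]
      using set_nn_integral_pos[OF U_meas _ U_meas subset_refl _ U_pos] by simp
  qed
  show "\<forall>x\<in>X. Z_fn \<eta> T X U K c cT t x = (\<integral>\<^sup>+u\<in>U. ennreal (exp (- qr t x u)) \<partial>lborel)
            \<and> 0 < enn2real (Z_fn \<eta> T X U K c cT t x)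
            \<and> Z_fn \<eta> T X U K c cT t x = ennreal (enn2real (Z_fn \<eta> T X U K c cT t x))"
    using Zeq Zpos Zfin by (auto simp: enn2real_positive_iff less_top)
  show "\<forall>x\<in>X. (\<integral>\<^sup>+u\<in>U. exp_e (- (ereal (1 - \<eta>) * Q t x u)) \<partial>lborel)
               = (\<integral>\<^sup>+u\<in>U. ennreal (exp (- ((1 - \<eta>) * qr t x u))) \<partial>lborel)
            \<and> (\<integral>\<^sup>+u\<in>U. ennreal (exp (- ((1 - \<eta>) * qr t x u))) \<partial>lborel) < \<top>"
    using Ceq Cfin by auto
  show ps_eq: "\<forall>x u. ps t x u = exp (- qr t x u) / enn2real (Z_fn \<eta> T X U K c cT t x)"
    unfolding opt_policy_def qr_def by simp
  have Zm: "(\<lambda>x. Z_fn \<eta> T X U K c cT t x) \<in> borel_measurable (restrict_space borel X)"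
  proof -
    have "(\<lambda>(x, u). ennreal (exp (- qr t x u))) \<in> borel_measurable (restrict_space borel (X \<times> U))"
      using qm by (simp add: split_beta')
    from fst_integral_measurable[OF this] show ?thesis
      apply (rule measurable_cong[THEN iffD1, rotated])
      using Zeq X_meas by (simp add: space_restrict_space)
  qed
  have Zm2: "(\<lambda>p. enn2real (Z_fn \<eta> T X U K c cT t (fst p))) \<in> borel_measurable (restrict_space borel (X \<times> U))"
    using measurable_comp[OF fst_measurable_XU Zm] by (simp add: comp_def)
  have "(\<lambda>p. exp (- (\<lambda>(x, u). qr t x u) p) / enn2real (Z_fn \<eta> T X U K c cT t (fst p)))
          \<in> borel_measurable (restrict_space borel (X \<times> U))"
    using qm Zm2 by measurable
  then show "(\<lambda>(x, u). ps t x u) \<in> borel_measurable (restrict_space borel (X \<times> U))"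
    by (simp add: ps_eq split_beta')
  show "\<forall>x\<in>X. ps t x \<in> Lpow (1 - \<eta>) U"
  proof
    fix x assume x: "x \<in> X"
    define Zr where "Zr = enn2real (Z_fn \<eta> T X U K c cT t x)"
    have Zr: "Zr > 0" "Z_fn \<eta> T X U K c cT t x = ennreal Zr"
      using Zpos[OF x] Zfin[OF x] unfolding Zr_def by (auto simp: enn2real_positive_iff)
    have pse: "ps t x = (\<lambda>u. exp (- qr t x u) / Zr)" using ps_eq Zr_def by auto
    have m: "ps t x \<in> borel_measurable (restrict_space borel U)"
      unfolding pse using qsec[OF x] by measurable
    have i1: "(\<integral>\<^sup>+u\<in>U. ennreal (ps t x u) \<partial>lborel) = 1"
    proof -
      have "(\<integral>\<^sup>+u\<in>U. ennreal (ps t x u) \<partial>lborel) = (\<integral>\<^sup>+u\<in>U. ennreal (1 / Zr) * ennreal (exp (- qr t x u)) \<partial>lborel)"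
        unfolding pse using Zr by (intro nn_integral_cong) (simp add: ennreal_mult[symmetric] divide_inverse mult.commute)
      also have "\<dots> = ennreal (1 / Zr) * (\<integral>\<^sup>+u\<in>U. ennreal (exp (- qr t x u)) \<partial>lborel)"
        using qsec[OF x] U_meas
        by (subst nn_integral_cmult[symmetric])
           (auto simp: mult.assoc borel_measurable_restrict_space_iff_ennreal[symmetric] measurable_lborel1 cong: measurable_cong_sets)
      also have "\<dots> = ennreal (1 / Zr) * ennreal Zr" using Zeq[OF x] Zr by simp
      also have "\<dots> = 1" using Zr by (simp add: ennreal_mult[symmetric])
      finally show ?thesis .
    qed
    have i2: "(\<integral>\<^sup>+u\<in>U. pow_enn (ps t x u) (1 - \<eta>) \<partial>lborel) < \<top>"
    proof -
      have "(\<integral>\<^sup>+u\<in>U. pow_enn (ps t x u) (1 - \<eta>) \<partial>lborel)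
          = (\<integral>\<^sup>+u\<in>U. ennreal (Zr powr (- (1 - \<eta>))) * ennreal (exp (- ((1 - \<eta>) * qr t x u))) \<partial>lborel)"
      proof (intro nn_integral_cong)
        fix u
        have "(exp (- qr t x u) / Zr) powr (1 - \<eta>) = exp (- qr t x u) powr (1 - \<eta>) / Zr powr (1 - \<eta>)"
          using Zr by (intro powr_divide)
        also have "\<dots> = exp (- ((1 - \<eta>) * qr t x u)) / Zr powr (1 - \<eta>)"
          by (simp add: exp_powr_real mult.commute)
        also have "\<dots> = Zr powr (- (1 - \<eta>)) * exp (- ((1 - \<eta>) * qr t x u))"
          by (simp only: powr_minus divide_inverse mult.commute)
        finally have "(exp (- qr t x u) / Zr) powr (1 - \<eta>) = Zr powr (- (1 - \<eta>)) * exp (- ((1 - \<eta>) * qr t x u))" .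
        then show "pow_enn (ps t x u) (1 - \<eta>) * indicator U u
             = ennreal (Zr powr (- (1 - \<eta>))) * ennreal (exp (- ((1 - \<eta>) * qr t x u))) * indicator U u"
          unfolding pse pow_enn_def using Zr by (simp add: ennreal_mult[symmetric])
      qed
      also have "\<dots> = ennreal (Zr powr (- (1 - \<eta>))) * (\<integral>\<^sup>+u\<in>U. ennreal (exp (- ((1 - \<eta>) * qr t x u))) \<partial>lborel)"
        using qsec[OF x] U_meas
        by (subst nn_integral_cmult[symmetric])
           (auto simp: mult.assoc borel_measurable_restrict_space_iff_ennreal[symmetric] measurable_lborel1 cong: measurable_cong_sets)
      also have "\<dots> < \<top>" using Cfin[OF x] by (simp add: ennreal_mult_less_top)
      finally show ?thesis .
    qed
    show "ps t x \<in> Lpow (1 - \<eta>) U"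
      unfolding Lpow_def prob_density_on_def using m i1 i2 Zr pse by (auto intro: divide_nonneg_pos)
  qed
qed

end



lemma set_nn_integral_cmult:
  fixes f :: "'b::euclidean_space \<Rightarrow> ennreal"
  assumes U: "U \<in> sets borel" and f: "f \<in> borel_measurable (restrict_space borel U)"
  shows "(\<integral>\<^sup>+u\<in>U. k * f u \<partial>lborel) = k * (\<integral>\<^sup>+u\<in>U. f u \<partial>lborel)"
proof -
  have "(\<lambda>u. f u * indicator U u) \<in> borel_measurable borel"
    using f U by (simp add: borel_measurable_restrict_space_iff_ennreal)
  then have "(\<lambda>u. f u * indicator U u) \<in> borel_measurable lborel" by (simp add: measurable_lborel1)
  then show ?thesis by (subst nn_integral_cmult[symmetric]) (auto simp: mult.assoc)
qed

lemma one_step: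
  fixes \<rho> cc qq :: "'b::euclidean_space \<Rightarrow> real" and W :: "'b \<Rightarrow> ennreal" and \<eta> :: real
  assumes U: "U \<in> sets borel" and e0: "\<eta> \<noteq> 0" and e1: "\<eta> \<noteq> 1"
    and rho: "\<rho> \<in> Lpow (1 - \<eta>) U"
    and qq: "qq \<in> borel_measurable (restrict_space borel U)"
    and Cfin: "(\<integral>\<^sup>+u\<in>U. ennreal (exp (- ((1 - \<eta>) * qq u))) \<partial>lborel) < \<top>"
    and G_def: "G = (\<integral>\<^sup>+u\<in>U. ennreal (\<rho> u * exp (\<eta> * (cc u - renyi (1 - \<eta>) U \<rho>))) * W u \<partial>lborel)"
    and vt_def: "vt = ln (enn2real (\<integral>\<^sup>+u\<in>U. ennreal (exp (- ((1 - \<eta>) * qq u))) \<partial>lborel)) / (\<eta> - 1)"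
  shows "\<eta> > 0 \<Longrightarrow> (\<forall>u\<in>U. ennreal (exp (\<eta> * (qq u - cc u))) \<le> W u) \<Longrightarrow> ennreal (exp (\<eta> * vt)) \<le> G"
    and "\<eta> < 0 \<Longrightarrow> (\<forall>u\<in>U. W u \<le> ennreal (exp (\<eta> * (qq u - cc u)))) \<Longrightarrow> G \<le> ennreal (exp (\<eta> * vt))"
    and "(\<forall>u\<in>U. W u = ennreal (exp (\<eta> * (qq u - cc u)))) \<Longrightarrow> G = ennreal (exp (\<eta> * vt)) \<Longrightarrow>
          AE u in lborel. u \<in> U \<longrightarrow> \<rho> u = exp (- qq u) / enn2real (\<integral>\<^sup>+u\<in>U. ennreal (exp (- qq u)) \<partial>lborel)"
    and "(\<forall>u\<in>U. W u = ennreal (exp (\<eta> * (qq u - cc u)))) \<Longrightarrow> l0 > 0 \<Longrightarrow> (\<forall>u\<in>U. \<rho> u = l0 * exp (- qq u))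
          \<Longrightarrow> G = ennreal (exp (\<eta> * vt))"
proof -
  have a0: "1 - \<eta> \<noteq> 0" and a1: "1 - \<eta> \<noteq> 1" using e0 e1 by auto
  define A where "A = (\<integral>\<^sup>+u\<in>U. ennreal (\<rho> u * exp ((1 - (1 - \<eta>)) * qq u)) \<partial>lborel)"
  define B where "B = (\<integral>\<^sup>+u\<in>{u\<in>U. \<rho> u > 0}. ennreal (\<rho> u powr (1 - \<eta>)) \<partial>lborel)"
  define C where "C = (\<integral>\<^sup>+u\<in>U. ennreal (exp (- ((1 - \<eta>) * qq u))) \<partial>lborel)"
  define l where "l = (enn2real B / enn2real C) powr (1 / (1 - \<eta>))"
  note CI = core_ineq[OF U a0 a1 rho qq Cfin A_def B_def C_def l_def]
  define Br where "Br = enn2real B"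
  define Cr where "Cr = enn2real C"
  have Br: "Br > 0" and Cr: "Cr > 0" using CI unfolding Br_def Cr_def by auto
  define H where "H = renyi (1 - \<eta>) U \<rho>"
  have H: "H = ln Br / ((1 - \<eta>) * \<eta>)" unfolding H_def renyi_def Br_def B_def by simp
  have vt: "vt = ln Cr / (\<eta> - 1)" unfolding vt_def Cr_def C_def ..
  have EH: "exp (- (\<eta> * H)) * (l * Cr) = exp (\<eta> * vt)"
    using value_identity[OF Br Cr e0 e1] unfolding H vt l_def Br_def[symmetric] Cr_def[symmetric] by simp
  from rho have rho_m: "\<rho> \<in> borel_measurable (restrict_space borel U)" and rho_nn: "\<forall>u\<in>U. 0 \<le> \<rho> u"
    and rho_int: "(\<integral>\<^sup>+u\<in>U. ennreal (\<rho> u) \<partial>lborel) = 1"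
    unfolding Lpow_def prob_density_on_def by auto
  define E where "E u = ennreal (exp (\<eta> * (qq u - cc u)))" for u
  define G0 where "G0 = (\<integral>\<^sup>+u\<in>U. ennreal (\<rho> u * exp (\<eta> * (cc u - H))) * E u \<partial>lborel)"
  have G0: "G0 = ennreal (exp (- (\<eta> * H))) * A"
  proof -
    have "G0 = (\<integral>\<^sup>+u\<in>U. ennreal (exp (- (\<eta> * H))) * ennreal (\<rho> u * exp ((1 - (1 - \<eta>)) * qq u)) \<partial>lborel)"
      unfolding G0_def E_def
    proof (intro nn_integral_cong)
      fix u
      show "ennreal (\<rho> u * exp (\<eta> * (cc u - H))) * ennreal (exp (\<eta> * (qq u - cc u))) * indicator U u =
         ennreal (exp (- (\<eta> * H))) * ennreal (\<rho> u * exp ((1 - (1 - \<eta>)) * qq u)) * indicator U u"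
      proof (cases "u \<in> U")
        case True
        then have "\<rho> u \<ge> 0" using rho_nn by auto
        then have r0: "\<rho> u * exp (\<eta> * (cc u - H)) \<ge> 0" "\<rho> u * exp ((1 - (1 - \<eta>)) * qq u) \<ge> 0" by auto
        have eq: "\<rho> u * exp (\<eta> * (cc u - H)) * exp (\<eta> * (qq u - cc u)) = exp (- (\<eta> * H)) * (\<rho> u * exp ((1 - (1 - \<eta>)) * qq u))"
          by (simp add: exp_add[symmetric] algebra_simps)
        have "ennreal (\<rho> u * exp (\<eta> * (cc u - H))) * ennreal (exp (\<eta> * (qq u - cc u)))
            = ennreal (\<rho> u * exp (\<eta> * (cc u - H)) * exp (\<eta> * (qq u - cc u)))"
          by (rule ennreal_mult[symmetric]) (use r0 in auto)
        also have "\<dots> = ennreal (exp (- (\<eta> * H))) * ennreal (\<rho> u * exp ((1 - (1 - \<eta>)) * qq u))"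
          unfolding eq by (rule ennreal_mult) (use r0 in auto)
        finally show ?thesis by simp
      qed simp
    qed
    also have "\<dots> = ennreal (exp (- (\<eta> * H))) * A"
      unfolding A_def using U rho_m qq by (intro set_nn_integral_cmult) auto
    finally show ?thesis .
  qed
  have GE: "ennreal (exp (- (\<eta> * H))) * ennreal (l * Cr) = ennreal (exp (\<eta> * vt))"
    using EH l_def Cr by (simp add: ennreal_mult[symmetric])
  have Geq: "G = G0" if "\<forall>u\<in>U. W u = E u"
    unfolding G_def G0_def H_def using that by (intro nn_integral_cong) (auto simp: indicator_def)
  show "\<eta> > 0 \<Longrightarrow> (\<forall>u\<in>U. ennreal (exp (\<eta> * (qq u - cc u))) \<le> W u) \<Longrightarrow> ennreal (exp (\<eta> * vt)) \<le> G"
  proof -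
    assume ep: "\<eta> > 0" and W: "\<forall>u\<in>U. ennreal (exp (\<eta> * (qq u - cc u))) \<le> W u"
    have "ennreal (exp (\<eta> * vt)) = ennreal (exp (- (\<eta> * H))) * ennreal (l * Cr)" using GE ..
    also have "\<dots> \<le> ennreal (exp (- (\<eta> * H))) * A"
      using CI ep unfolding Cr_def by (intro mult_left_mono) auto
    also have "\<dots> = G0" using G0 ..
    also have "\<dots> \<le> G"
      unfolding G0_def G_def H_def E_def using W by (intro nn_integral_mono) (auto simp: indicator_def intro!: mult_left_mono)
    finally show ?thesis .
  qed
  show "\<eta> < 0 \<Longrightarrow> (\<forall>u\<in>U. W u \<le> ennreal (exp (\<eta> * (qq u - cc u)))) \<Longrightarrow> G \<le> ennreal (exp (\<eta> * vt))"
  proof -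
    assume ep: "\<eta> < 0" and W: "\<forall>u\<in>U. W u \<le> ennreal (exp (\<eta> * (qq u - cc u)))"
    have "G \<le> G0"
      unfolding G0_def G_def H_def E_def using W by (intro nn_integral_mono) (auto simp: indicator_def intro!: mult_left_mono)
    also have "\<dots> = ennreal (exp (- (\<eta> * H))) * A" using G0 .
    also have "\<dots> \<le> ennreal (exp (- (\<eta> * H))) * ennreal (l * Cr)"
      using CI ep unfolding Cr_def by (intro mult_left_mono) auto
    also have "\<dots> = ennreal (exp (\<eta> * vt))" using GE .
    finally show ?thesis .
  qed
  show "(\<forall>u\<in>U. W u = ennreal (exp (\<eta> * (qq u - cc u)))) \<Longrightarrow> G = ennreal (exp (\<eta> * vt)) \<Longrightarrow>
          AE u in lborel. u \<in> U \<longrightarrow> \<rho> u = exp (- qq u) / enn2real (\<integral>\<^sup>+u\<in>U. ennreal (exp (- qq u)) \<partial>lborel)"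
  proof -
    assume W: "\<forall>u\<in>U. W u = ennreal (exp (\<eta> * (qq u - cc u)))" and Gv: "G = ennreal (exp (\<eta> * vt))"
    have "ennreal (exp (- (\<eta> * H))) * A = ennreal (exp (- (\<eta> * H))) * ennreal (l * Cr)"
      using Geq W Gv G0 GE unfolding E_def by simp
    then have "ennreal (1 / exp (- (\<eta> * H))) * (ennreal (exp (- (\<eta> * H))) * A)
        = ennreal (1 / exp (- (\<eta> * H))) * (ennreal (exp (- (\<eta> * H))) * ennreal (l * Cr))" by simp
    then have "A = ennreal (l * Cr)"
      by (simp add: mult.assoc[symmetric] ennreal_mult[symmetric] del: ennreal_mult')
    then have ae: "AE u in lborel. u \<in> U \<longrightarrow> \<rho> u = l * exp (- qq u)" using CI unfolding Cr_def by blast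
    have lpos: "l > 0" unfolding l_def using Br Cr unfolding Br_def Cr_def by simp
    have "1 = (\<integral>\<^sup>+u\<in>U. ennreal (\<rho> u) \<partial>lborel)" using rho_int ..
    also have "\<dots> = (\<integral>\<^sup>+u\<in>U. ennreal l * ennreal (exp (- qq u)) \<partial>lborel)"
      by (rule nn_integral_cong_AE) (use ae in eventually_elim, auto simp: indicator_def ennreal_mult lpos less_imp_le)
    also have "\<dots> = ennreal l * (\<integral>\<^sup>+u\<in>U. ennreal (exp (- qq u)) \<partial>lborel)"
      using U qq by (intro set_nn_integral_cmult) auto
    finally have Z1: "ennreal l * (\<integral>\<^sup>+u\<in>U. ennreal (exp (- qq u)) \<partial>lborel) = 1" ..
    define Z where "Z = (\<integral>\<^sup>+u\<in>U. ennreal (exp (- qq u)) \<partial>lborel)"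
    have Zt: "Z \<noteq> \<top>"
    proof
      assume "Z = \<top>"
      then have "ennreal l * Z = \<top>" using lpos by (simp add: ennreal_mult_top)
      then show False using Z1 unfolding Z_def by simp
    qed
    obtain z where z: "Z = ennreal z" "z \<ge> 0" using Zt by (cases Z) auto
    have "ennreal (l * z) = 1" using Z1 z lpos unfolding Z_def[symmetric] by (simp add: ennreal_mult)
    then have "l * z = 1" using lpos z by (simp add: ennreal_eq_1)
    then have "enn2real Z = 1 / l" using z lpos by (simp add: field_simps)
    then have "enn2real (\<integral>\<^sup>+u\<in>U. ennreal (exp (- qq u)) \<partial>lborel) = 1 / l" unfolding Z_def .
    then show ?thesis using ae lpos by (auto elim!: eventually_mono simp: mult.commute)
  qed
  show "(\<forall>u\<in>U. W u = ennreal (exp (\<eta> * (qq u - cc u)))) \<Longrightarrow> l0 > 0 \<Longrightarrow> (\<forall>u\<in>U. \<rho> u = l0 * exp (- qq u))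
          \<Longrightarrow> G = ennreal (exp (\<eta> * vt))"
  proof -
    assume W: "\<forall>u\<in>U. W u = ennreal (exp (\<eta> * (qq u - cc u)))" and l0: "l0 > 0"
      and rl: "\<forall>u\<in>U. \<rho> u = l0 * exp (- qq u)"
    have Cm: "(\<lambda>u. ennreal (exp (- ((1 - \<eta>) * qq u)))) \<in> borel_measurable (restrict_space borel U)"
      using qq by measurable
    have "A = (\<integral>\<^sup>+u\<in>U. ennreal l0 * ennreal (exp (- ((1 - \<eta>) * qq u))) \<partial>lborel)"
      unfolding A_def
    proof (intro nn_integral_cong)
      fix u
      show "ennreal (\<rho> u * exp ((1 - (1 - \<eta>)) * qq u)) * indicator U u =
          ennreal l0 * ennreal (exp (- ((1 - \<eta>) * qq u))) * indicator U u"
      proof (cases "u \<in> U")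
        case True
        have "\<rho> u * exp ((1 - (1 - \<eta>)) * qq u) = l0 * exp (- ((1 - \<eta>) * qq u))"
          using rl True by (simp add: exp_add[symmetric] algebra_simps)
        then show ?thesis using l0 True by (simp add: ennreal_mult)
      qed simp
    qed
    also have "\<dots> = ennreal l0 * C" unfolding C_def using U Cm by (intro set_nn_integral_cmult) auto
    finally have A0: "A = ennreal l0 * C" .
    have "B = (\<integral>\<^sup>+u\<in>U. ennreal (l0 powr (1 - \<eta>)) * ennreal (exp (- ((1 - \<eta>) * qq u))) \<partial>lborel)"
      unfolding B_def
    proof (intro nn_integral_cong)
      fix u
      show "ennreal (\<rho> u powr (1 - \<eta>)) * indicator {u \<in> U. 0 < \<rho> u} u =
          ennreal (l0 powr (1 - \<eta>)) * ennreal (exp (- ((1 - \<eta>) * qq u))) * indicator U u"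
      proof (cases "u \<in> U")
        case True
        have "\<rho> u powr (1 - \<eta>) = l0 powr (1 - \<eta>) * exp (- ((1 - \<eta>) * qq u))"
          using rl True l0 by (simp add: powr_mult exp_powr_real algebra_simps)
        moreover have "\<rho> u > 0" using rl True l0 by simp
        ultimately show ?thesis using l0 True by (simp add: ennreal_mult indicator_def)
      qed (simp add: indicator_def)
    qed
    also have "\<dots> = ennreal (l0 powr (1 - \<eta>)) * C" unfolding C_def using U Cm by (intro set_nn_integral_cmult) auto
    finally have B0: "B = ennreal (l0 powr (1 - \<eta>)) * C" .
    have "Br = l0 powr (1 - \<eta>) * Cr" unfolding Br_def Cr_def B0 by (simp add: enn2real_mult)
    then have "l = l0" unfolding l_def Br_def[symmetric] Cr_def[symmetric] using Cr l0 a0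
      by (simp add: powr_powr)
    then have "A = ennreal (l * Cr)" unfolding A0 Cr_def using CI l0 by (simp add: ennreal_mult)
    then show ?thesis using Geq W G0 GE unfolding E_def by simp
  qed
qed




context rs_setting
begin

definition IND :: "nat \<Rightarrow> bool" where
  "IND t \<longleftrightarrow> (\<forall>x\<in>X. V t x = ereal (vr t x)) \<and> vr t \<in> borel_measurable (restrict_space borel X)
   \<and> (\<forall>\<pi>. admissible_policy \<eta> T X U t \<pi> \<longrightarrow> (\<forall>x\<in>X.
          (\<eta> > 0 \<longrightarrow> ennreal (exp (\<eta> * vr t x)) \<le> R \<pi> (T - t) t x)
        \<and> (\<eta> < 0 \<longrightarrow> R \<pi> (T - t) t x \<le> ennreal (exp (\<eta> * vr t x)))))
   \<and> (\<forall>x\<in>X. R ps (T - t) t x = ennreal (exp (\<eta> * vr t x)))"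

lemma IND_T: "IND T"
proof -
  have V: "V T x = ereal (cT x)" for x unfolding value_fn_def by simp
  then have vr: "vr T x = cT x" for x unfolding vr_def by simp
  show ?thesis unfolding IND_def vr using V cT_meas by simp
qed

lemma IND_D:
  assumes "IND t"
  shows "\<forall>x\<in>X. V t x = ereal (vr t x)" "vr t \<in> borel_measurable (restrict_space borel X)"
    "\<And>\<pi> x. admissible_policy \<eta> T X U t \<pi> \<Longrightarrow> x \<in> X \<Longrightarrow> \<eta> > 0 \<Longrightarrow> ennreal (exp (\<eta> * vr t x)) \<le> R \<pi> (T - t) t x"
    "\<And>\<pi> x. admissible_policy \<eta> T X U t \<pi> \<Longrightarrow> x \<in> X \<Longrightarrow> \<eta> < 0 \<Longrightarrow> R \<pi> (T - t) t x \<le> ennreal (exp (\<eta> * vr t x))"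
    "\<forall>x\<in>X. R ps (T - t) t x = ennreal (exp (\<eta> * vr t x))"
  using assms unfolding IND_def by auto

lemma ps_good:
  assumes s: "s < T" and I: "IND (Suc s)"
  shows "(\<lambda>(x, u). ps s x u) \<in> borel_measurable (restrict_space borel (X \<times> U))"
    and "\<forall>x\<in>X. ps s x \<in> Lpow (1 - \<eta>) U"
proof -
  note SQ = step_Q[OF s IND_D(1)[OF I] IND_D(2)[OF I]]
  have Qq: "\<forall>x\<in>X. \<forall>u\<in>U. Q s x u = ereal (qr s x u)" using SQ(1) by blast
  note PF = ps_facts[OF s Qq SQ(2)]
  show "(\<lambda>(x, u). ps s x u) \<in> borel_measurable (restrict_space borel (X \<times> U))" using PF(4) .
  show "\<forall>x\<in>X. ps s x \<in> Lpow (1 - \<eta>) U" using PF(5) .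
qed

lemma adm_mono: "admissible_policy \<eta> T X U t \<pi> \<Longrightarrow> t \<le> s \<Longrightarrow> admissible_policy \<eta> T X U s \<pi>"
  unfolding admissible_policy_def by auto

lemma R_unfold:
  assumes "t < T"
  shows "R \<pi> (T - t) t x = (\<integral>\<^sup>+u\<in>U. ennreal (\<pi> t x u * exp (\<eta> * (c t x u - renyi (1 - \<eta>) U (\<pi> t x))))
              * (\<integral>\<^sup>+y. R \<pi> (T - Suc t) (Suc t) y \<partial>K x u) \<partial>lborel)"
proof -
  have "T - t = Suc (T - Suc t)" using assms by simp
  then show ?thesis by simp
qed

definition "Cint t x = (\<integral>\<^sup>+u\<in>U. ennreal (exp (- ((1 - \<eta>) * qr t x u))) \<partial>lborel)"
definition "vt t x = ln (enn2real (Cint t x)) / (\<eta> - 1)"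

lemma IND_step:
  assumes t: "t < T" and hyp: "\<forall>s. t < s \<and> s \<le> T \<longrightarrow> IND s"
  shows "IND t \<and> (\<forall>x\<in>X. vr t x = vt t x)"
proof -
  have I: "IND (Suc t)" using hyp t by simp
  note SQ = step_Q[OF t IND_D(1)[OF I] IND_D(2)[OF I]]
  have Qq: "\<forall>x\<in>X. \<forall>u\<in>U. Q t x u = ereal (qr t x u)" using SQ(1) by blast
  have Ieq: "\<And>x u. x \<in> X \<Longrightarrow> u \<in> U \<Longrightarrow> (\<integral>\<^sup>+y. ennreal (exp (\<eta> * vr (Suc t) y)) \<partial>K x u) = ennreal (exp (\<eta> * (qr t x u - c t x u)))"
    using SQ(1) by blast
  note PF = ps_facts[OF t Qq SQ(2)]
  have adm_ps: "admissible_policy \<eta> T X U t ps"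
    unfolding admissible_policy_def
  proof (intro allI impI)
    fix s assume s: "t \<le> s \<and> s < T"
    then have "IND (Suc s)" using hyp by simp
    then show "(\<lambda>(x, u). ps s x u) \<in> borel_measurable (restrict_space borel (X \<times> U)) \<and> (\<forall>x\<in>X. ps s x \<in> Lpow (1 - \<eta>) U)"
      using ps_good s by blast
  qed
  have qsec: "(\<lambda>u. qr t x u) \<in> borel_measurable (restrict_space borel U)" if "x \<in> X" for x
    using section_measurable[OF SQ(2) that] by simp
  have Cfin: "Cint t x < \<top>" if "x \<in> X" for x using PF(2) that unfolding Cint_def by blast
  have bnd: "(\<eta> > 0 \<longrightarrow> ennreal (exp (\<eta> * vt t x)) \<le> R \<pi> (T - t) t x)
           \<and> (\<eta> < 0 \<longrightarrow> R \<pi> (T - t) t x \<le> ennreal (exp (\<eta> * vt t x)))"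
    if adm: "admissible_policy \<eta> T X U t \<pi>" and x: "x \<in> X" for \<pi> x
  proof -
    have rho: "\<pi> t x \<in> Lpow (1 - \<eta>) U" using adm x t unfolding admissible_policy_def by auto
    have adm1: "admissible_policy \<eta> T X U (Suc t) \<pi>" using adm by (rule adm_mono) simp
    note OS = one_step[OF U_meas eta(1) eta(2) rho qsec[OF x] Cfin[OF x, unfolded Cint_def] R_unfold[OF t, of \<pi> x] vt_def[of t x, unfolded Cint_def]]
    show ?thesis
    proof (intro conjI impI)
      assume ep: "\<eta> > 0"
      show "ennreal (exp (\<eta> * vt t x)) \<le> R \<pi> (T - t) t x"
      proof (rule OS(1)[OF ep], intro ballI)
        fix u assume u: "u \<in> U"
        have "ennreal (exp (\<eta> * (qr t x u - c t x u))) = (\<integral>\<^sup>+y. ennreal (exp (\<eta> * vr (Suc t) y)) \<partial>K x u)"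
          using Ieq[OF x u] ..
        also have "\<dots> \<le> (\<integral>\<^sup>+y. R \<pi> (T - Suc t) (Suc t) y \<partial>K x u)"
          using K_AE[OF x u] by (intro nn_integral_mono_AE) (auto elim!: eventually_mono intro: IND_D(3)[OF I adm1 _ ep])
        finally show "ennreal (exp (\<eta> * (qr t x u - c t x u))) \<le> (\<integral>\<^sup>+y. R \<pi> (T - Suc t) (Suc t) y \<partial>K x u)" .
      qed
    next
      assume ep: "\<eta> < 0"
      show "R \<pi> (T - t) t x \<le> ennreal (exp (\<eta> * vt t x))"
      proof (rule OS(2)[OF ep], intro ballI)
        fix u assume u: "u \<in> U"
        have "(\<integral>\<^sup>+y. R \<pi> (T - Suc t) (Suc t) y \<partial>K x u) \<le> (\<integral>\<^sup>+y. ennreal (exp (\<eta> * vr (Suc t) y)) \<partial>K x u)"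
          using K_AE[OF x u] by (intro nn_integral_mono_AE) (auto elim!: eventually_mono intro: IND_D(4)[OF I adm1 _ ep])
        also have "\<dots> = ennreal (exp (\<eta> * (qr t x u - c t x u)))" using Ieq[OF x u] .
        finally show "(\<integral>\<^sup>+y. R \<pi> (T - Suc t) (Suc t) y \<partial>K x u) \<le> ennreal (exp (\<eta> * (qr t x u - c t x u)))" .
      qed
    qed
  qed
  have att: "R ps (T - t) t x = ennreal (exp (\<eta> * vt t x))" if x: "x \<in> X" for x
  proof -
    have rho: "ps t x \<in> Lpow (1 - \<eta>) U" using PF(5) x by blast
    note OS = one_step[OF U_meas eta(1) eta(2) rho qsec[OF x] Cfin[OF x, unfolded Cint_def] R_unfold[OF t, of ps x] vt_def[of t x, unfolded Cint_def]]
    define Zr where "Zr = enn2real (Z_fn \<eta> T X U K c cT t x)"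
    have Zr: "Zr > 0" using PF(1) x unfolding Zr_def by blast
    show ?thesis
    proof (rule OS(4)[of "1 / Zr"])
      show "\<forall>u\<in>U. (\<integral>\<^sup>+y. R ps (T - Suc t) (Suc t) y \<partial>K x u) = ennreal (exp (\<eta> * (qr t x u - c t x u)))"
      proof
        fix u assume u: "u \<in> U"
        have "(\<integral>\<^sup>+y. R ps (T - Suc t) (Suc t) y \<partial>K x u) = (\<integral>\<^sup>+y. ennreal (exp (\<eta> * vr (Suc t) y)) \<partial>K x u)"
          using K_AE[OF x u] IND_D(5)[OF I] by (intro nn_integral_cong_AE) (auto elim!: eventually_mono)
        also have "\<dots> = ennreal (exp (\<eta> * (qr t x u - c t x u)))" using Ieq[OF x u] .
        finally show "(\<integral>\<^sup>+y. R ps (T - Suc t) (Suc t) y \<partial>K x u) = ennreal (exp (\<eta> * (qr t x u - c t x u)))" .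
      qed
      show "0 < 1 / Zr" using Zr by simp
      show "\<forall>u\<in>U. ps t x u = 1 / Zr * exp (- qr t x u)" using PF(3) unfolding Zr_def by simp
    qed
  qed
  have Vt: "V t x = ereal (vt t x)" if x: "x \<in> X" for x
  proof -
    have "V t x = (INF \<pi> \<in> {\<pi>. admissible_policy \<eta> T X U t \<pi>}. cost_to_go \<eta> T U K c cT \<pi> t x)"
      unfolding value_fn_def using t by simp
    also have "\<dots> = ereal (vt t x)"
    proof (rule antisym)
      have "cost_to_go \<eta> T U K c cT ps t x = ereal (vt t x)"
        unfolding cost_to_go_def att[OF x] using cost_eq[OF eta(1)] .
      then show "(INF \<pi> \<in> {\<pi>. admissible_policy \<eta> T X U t \<pi>}. cost_to_go \<eta> T U K c cT \<pi> t x) \<le> ereal (vt t x)"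
        using adm_ps by (metis (mono_tags, lifting) INF_lower mem_Collect_eq)
      show "ereal (vt t x) \<le> (INF \<pi> \<in> {\<pi>. admissible_policy \<eta> T X U t \<pi>}. cost_to_go \<eta> T U K c cT \<pi> t x)"
      proof (rule INF_greatest)
        fix \<pi> assume "\<pi> \<in> {\<pi>. admissible_policy \<eta> T X U t \<pi>}"
        then have adm: "admissible_policy \<eta> T X U t \<pi>" by simp
        show "ereal (vt t x) \<le> cost_to_go \<eta> T U K c cT \<pi> t x"
          unfolding cost_to_go_def
        proof (cases "\<eta> > 0")
          case True
          then show "ereal (vt t x) \<le> ereal (1 / \<eta>) * ln_enn (R \<pi> (T - t) t x)"
            using bnd[OF adm x] by (intro cost_ge_pos) auto
        next
          case False
          then have "\<eta> < 0" using eta by simp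
          then show "ereal (vt t x) \<le> ereal (1 / \<eta>) * ln_enn (R \<pi> (T - t) t x)"
            using bnd[OF adm x] by (intro cost_ge_neg) auto
        qed
      qed
    qed
    finally show ?thesis .
  qed
  have vr_eq: "vr t x = vt t x" if "x \<in> X" for x using Vt[OF that] unfolding vr_def by simp
  have vm: "vr t \<in> borel_measurable (restrict_space borel X)"
  proof -
    have "(\<lambda>(x, u). ennreal (exp (- ((1 - \<eta>) * qr t x u)))) \<in> borel_measurable (restrict_space borel (X \<times> U))"
      using SQ(2) by (simp add: split_beta')
    from fst_integral_measurable[OF this]
    have "(\<lambda>x. ln (enn2real (Cint t x)) / (\<eta> - 1)) \<in> borel_measurable (restrict_space borel X)"
      unfolding Cint_def by measurable
    then show ?thesis
      apply (rule measurable_cong[THEN iffD1, rotated])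
      using vr_eq X_meas by (simp add: space_restrict_space vt_def)
  qed
  have "IND t"
    unfolding IND_def
  proof (intro conjI ballI allI impI)
    fix x assume "x \<in> X" then show "V t x = ereal (vr t x)" using Vt vr_eq by simp
  next
    show "vr t \<in> borel_measurable (restrict_space borel X)" using vm .
  next
    fix \<pi> x assume "admissible_policy \<eta> T X U t \<pi>" "x \<in> X" "0 < \<eta>"
    then show "ennreal (exp (\<eta> * vr t x)) \<le> R \<pi> (T - t) t x" using bnd vr_eq by auto
  next
    fix \<pi> x assume "admissible_policy \<eta> T X U t \<pi>" "x \<in> X" "\<eta> < 0"
    then show "R \<pi> (T - t) t x \<le> ennreal (exp (\<eta> * vr t x))" using bnd vr_eq by auto
  next
    fix x assume "x \<in> X" then show "R ps (T - t) t x = ennreal (exp (\<eta> * vr t x))" using att vr_eq by simp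
  qed
  then show ?thesis using vr_eq by blast
qed

lemma IND_all: "t \<le> T \<Longrightarrow> IND t"
proof (induction "T - t" arbitrary: t rule: less_induct)
  case less
  show ?case
  proof (cases "t = T")
    case True then show ?thesis using IND_T by simp
  next
    case False
    with less.prems have t: "t < T" by simp
    have "IND t \<and> (\<forall>x\<in>X. vr t x = vt t x)"
    proof (rule IND_step[OF t], intro allI impI)
      fix s assume "t < s \<and> s \<le> T"
      then have "T - s < T - t" "s \<le> T" by arith+
      then show "IND s" using less.hyps[of s] by blast
    qed
    then show ?thesis by blast
  qed
qed

lemma vr_vt: "t < T \<Longrightarrow> x \<in> X \<Longrightarrow> vr t x = vt t x"
  using IND_step[of t] IND_all by auto

end



lemma ln_enn_mono: "a \<le> b \<Longrightarrow> ln_enn a \<le> ln_enn b"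
proof -
  assume ab: "a \<le> b"
  show ?thesis
  proof (cases "a = 0 \<or> b = \<top>")
    case True then show ?thesis by (auto simp: ln_enn_def)
  next
    case False
    then have a0: "a \<noteq> 0" and bt: "b \<noteq> \<top>" by auto
    then have b0: "b \<noteq> 0" and at: "a \<noteq> \<top>" using ab by (auto simp: top_unique)
    obtain ra where ra: "a = ennreal ra" "ra > 0" using a0 at by (cases a) (auto simp: top_ennreal.rep_eq)
    obtain rb where rb: "b = ennreal rb" "rb > 0" using b0 bt by (cases b) (auto simp: top_ennreal.rep_eq)
    have "ra \<le> rb" using ab ra rb by (simp add: ennreal_le_iff2)
    then show ?thesis using ra rb by (simp add: ln_enn_ennreal)
  qed
qed

lemma ereal_mult_neg_antimono:
  fixes a b :: ereal and c :: real
  assumes "c < 0" "a \<le> b"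
  shows "ereal c * b \<le> ereal c * a"
  using assms by (cases a; cases b) (auto simp: mult_left_mono_neg)

context rs_setting
begin

theorem main_result:
  "admissible_policy \<eta> T X U 0 ps
     \<and> (\<forall>t<T. \<forall>x\<in>X. cost_to_go \<eta> T U K c cT ps t x = V t x)
     \<and> (\<forall>\<mu>0 \<pi>. prob_space \<mu>0 \<and> sets \<mu>0 = sets borel \<and> emeasure \<mu>0 X = 1
                \<and> admissible_policy \<eta> T X U 0 \<pi>
              \<longrightarrow> total_obj \<eta> T U K c cT \<mu>0 ps \<le> total_obj \<eta> T U K c cT \<mu>0 \<pi>)
     \<and> (\<forall>\<pi>. admissible_policy \<eta> T X U 0 \<pi>
             \<and> (\<forall>t<T. \<forall>x\<in>X. cost_to_go \<eta> T U K c cT \<pi> t x = V t x)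
           \<longrightarrow> (\<forall>t<T. \<forall>x\<in>X. AE u in lborel. u \<in> U \<longrightarrow> \<pi> t x u = ps t x u))
     \<and> (\<forall>t<T. \<forall>x\<in>X. V t x
           = ereal (1 / (\<eta> - 1)) *
             ln_enn (\<integral>\<^sup>+u\<in>U. exp_e (- (ereal (1 - \<eta>) * Q t x u)) \<partial>lborel))"
proof (intro conjI allI impI ballI)
  show "admissible_policy \<eta> T X U 0 ps"
    unfolding admissible_policy_def
  proof (intro allI impI)
    fix s :: nat assume s: "0 \<le> s \<and> s < T"
    then have "IND (Suc s)" using IND_all by simp
    then show "(\<lambda>(x, u). ps s x u) \<in> borel_measurable (restrict_space borel (X \<times> U)) \<and> (\<forall>x\<in>X. ps s x \<in> Lpow (1 - \<eta>) U)"
      using ps_good s by blast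
  qed
next
  fix t x assume t: "t < T" and x: "x \<in> X"
  have I: "IND t" using IND_all t by simp
  show "cost_to_go \<eta> T U K c cT ps t x = V t x"
    unfolding cost_to_go_def using IND_D(5)[OF I] IND_D(1)[OF I] x cost_eq[OF eta(1)] by simp
next
  fix \<mu>0 :: "'a measure" and \<pi>
  assume asm: "prob_space \<mu>0 \<and> sets \<mu>0 = sets borel \<and> emeasure \<mu>0 X = 1 \<and> admissible_policy \<eta> T X U 0 \<pi>"
  then have adm: "admissible_policy \<eta> T X U 0 \<pi>" by simp
  interpret P: prob_space \<mu>0 using asm by simp
  have AEX: "AE x in \<mu>0. x \<in> X"
  proof -
    have "X \<in> P.events" using asm X_meas by simp
    moreover have "P.prob X = 1" using asm by (simp add: measure_def)
    ultimately show ?thesis using P.AE_in_set_eq_1 by simp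
  qed
  have I: "IND 0" using IND_all by simp
  show "total_obj \<eta> T U K c cT \<mu>0 ps \<le> total_obj \<eta> T U K c cT \<mu>0 \<pi>"
    unfolding total_obj_def
  proof (cases "\<eta> > 0")
    case True
    have "(\<integral>\<^sup>+x. R ps T 0 x \<partial>\<mu>0) \<le> (\<integral>\<^sup>+x. R \<pi> T 0 x \<partial>\<mu>0)"
      using AEX
    proof (intro nn_integral_mono_AE, eventually_elim)
      case (elim x)
      then show ?case using IND_D(5)[OF I] IND_D(3)[OF I adm \<open>x \<in> X\<close> True] by simp
    qed
    then show "ereal (1 / \<eta>) * ln_enn (\<integral>\<^sup>+x. R ps T 0 x \<partial>\<mu>0) \<le> ereal (1 / \<eta>) * ln_enn (\<integral>\<^sup>+x. R \<pi> T 0 x \<partial>\<mu>0)"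
      using True by (intro ereal_mult_left_mono ln_enn_mono) auto
  next
    case False
    then have en: "\<eta> < 0" using eta by simp
    have "(\<integral>\<^sup>+x. R \<pi> T 0 x \<partial>\<mu>0) \<le> (\<integral>\<^sup>+x. R ps T 0 x \<partial>\<mu>0)"
      using AEX
    proof (intro nn_integral_mono_AE, eventually_elim)
      case (elim x)
      then show ?case using IND_D(5)[OF I] IND_D(4)[OF I adm \<open>x \<in> X\<close> en] by simp
    qed
    then show "ereal (1 / \<eta>) * ln_enn (\<integral>\<^sup>+x. R ps T 0 x \<partial>\<mu>0) \<le> ereal (1 / \<eta>) * ln_enn (\<integral>\<^sup>+x. R \<pi> T 0 x \<partial>\<mu>0)"
      using en by (intro ereal_mult_neg_antimono ln_enn_mono) auto
  qed
next
  fix \<pi> t x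
  assume asm: "admissible_policy \<eta> T X U 0 \<pi> \<and> (\<forall>t<T. \<forall>x\<in>X. cost_to_go \<eta> T U K c cT \<pi> t x = V t x)"
    and t: "t < T" and x: "x \<in> X"
  have adm: "admissible_policy \<eta> T X U t \<pi>" using adm_mono[OF asm[THEN conjunct1], of t] by simp
  have I: "IND (Suc t)" using IND_all t by simp
  have It: "IND t" using IND_all t by simp
  note SQ = step_Q[OF t IND_D(1)[OF I] IND_D(2)[OF I]]
  have Qq: "\<forall>x\<in>X. \<forall>u\<in>U. Q t x u = ereal (qr t x u)" using SQ(1) by blast
  have Ieq: "\<And>x u. x \<in> X \<Longrightarrow> u \<in> U \<Longrightarrow> (\<integral>\<^sup>+y. ennreal (exp (\<eta> * vr (Suc t) y)) \<partial>K x u) = ennreal (exp (\<eta> * (qr t x u - c t x u)))"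
    using SQ(1) by blast
  note PF = ps_facts[OF t Qq SQ(2)]
  have qsec: "(\<lambda>u. qr t x u) \<in> borel_measurable (restrict_space borel U)"
    using section_measurable[OF SQ(2) x] by simp
  have Cfin: "Cint t x < \<top>" using PF(2) x unfolding Cint_def by blast
  have rho: "\<pi> t x \<in> Lpow (1 - \<eta>) U" using adm x t unfolding admissible_policy_def by auto
  note OS = one_step[OF U_meas eta(1) eta(2) rho qsec Cfin[unfolded Cint_def] R_unfold[OF t, of \<pi> x] vt_def[of t x, unfolded Cint_def]]
  have Wy: "R \<pi> (T - Suc t) (Suc t) y = ennreal (exp (\<eta> * vr (Suc t) y))" if y: "y \<in> X" for y
  proof (cases "Suc t < T")
    case True
    have "cost_to_go \<eta> T U K c cT \<pi> (Suc t) y = V (Suc t) y"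
      using asm[THEN conjunct2, rule_format, OF True y] .
    then have "cost_to_go \<eta> T U K c cT \<pi> (Suc t) y = ereal (vr (Suc t) y)"
      using IND_D(1)[OF I] y by simp
    then show ?thesis unfolding cost_to_go_def by (rule cost_eq_inv[OF eta(1)])
  next
    case False
    then have "Suc t = T" using t by simp
    moreover have "vr T y = cT y" unfolding vr_def value_fn_def by simp
    ultimately show ?thesis by simp
  qed
  have W: "\<forall>u\<in>U. (\<integral>\<^sup>+y. R \<pi> (T - Suc t) (Suc t) y \<partial>K x u) = ennreal (exp (\<eta> * (qr t x u - c t x u)))"
  proof
    fix u assume u: "u \<in> U"
    have "(\<integral>\<^sup>+y. R \<pi> (T - Suc t) (Suc t) y \<partial>K x u) = (\<integral>\<^sup>+y. ennreal (exp (\<eta> * vr (Suc t) y)) \<partial>K x u)"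
      using K_AE[OF x u] Wy by (intro nn_integral_cong_AE) (auto elim!: eventually_mono)
    also have "\<dots> = ennreal (exp (\<eta> * (qr t x u - c t x u)))" using Ieq[OF x u] .
    finally show "(\<integral>\<^sup>+y. R \<pi> (T - Suc t) (Suc t) y \<partial>K x u) = ennreal (exp (\<eta> * (qr t x u - c t x u)))" .
  qed
  have "cost_to_go \<eta> T U K c cT \<pi> t x = V t x"
    using asm[THEN conjunct2, rule_format, OF t x] .
  then have "cost_to_go \<eta> T U K c cT \<pi> t x = ereal (vr t x)"
    using IND_D(1)[OF It] x by simp
  then have "R \<pi> (T - t) t x = ennreal (exp (\<eta> * vr t x))"
    unfolding cost_to_go_def by (rule cost_eq_inv[OF eta(1)])
  then have G: "R \<pi> (T - t) t x = ennreal (exp (\<eta> * vt t x))" using vr_vt[OF t x] by simp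
  have "AE u in lborel. u \<in> U \<longrightarrow> \<pi> t x u = exp (- qr t x u) / enn2real (\<integral>\<^sup>+u\<in>U. ennreal (exp (- qr t x u)) \<partial>lborel)"
    by (rule OS(3)[OF W G])
  moreover have "ps t x u = exp (- qr t x u) / enn2real (\<integral>\<^sup>+u\<in>U. ennreal (exp (- qr t x u)) \<partial>lborel)" for u
    using PF(1) PF(3) x by simp
  ultimately show "AE u in lborel. u \<in> U \<longrightarrow> \<pi> t x u = ps t x u" by simp
next
  fix t x assume t: "t < T" and x: "x \<in> X"
  have I: "IND (Suc t)" using IND_all t by simp
  have It: "IND t" using IND_all t by simp
  note SQ = step_Q[OF t IND_D(1)[OF I] IND_D(2)[OF I]]
  have Qq: "\<forall>x\<in>X. \<forall>u\<in>U. Q t x u = ereal (qr t x u)" using SQ(1) by blast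
  note PF = ps_facts[OF t Qq SQ(2)]
  have qsec: "(\<lambda>u. qr t x u) \<in> borel_measurable (restrict_space borel U)"
    using section_measurable[OF SQ(2) x] by simp
  have Ceq: "(\<integral>\<^sup>+u\<in>U. exp_e (- (ereal (1 - \<eta>) * Q t x u)) \<partial>lborel) = Cint t x"
    using PF(2) x unfolding Cint_def by blast
  have Cfin: "Cint t x < \<top>" using PF(2) x unfolding Cint_def by blast
  have Cpos: "Cint t x > 0"
  proof -
    have "(\<lambda>u. ennreal (exp (- ((1 - \<eta>) * qr t x u)))) \<in> borel_measurable (restrict_space lborel U)"
      using qsec by (simp add: measurable_lborel1 cong: measurable_cong_sets)
    then show ?thesis unfolding Cint_def
      using set_nn_integral_pos[OF U_meas _ U_meas subset_refl _ U_pos] by simp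
  qed
  define Cr where "Cr = enn2real (Cint t x)"
  have Cr: "Cr > 0" "Cint t x = ennreal Cr" using Cpos Cfin unfolding Cr_def by (auto simp: enn2real_positive_iff)
  have "V t x = ereal (vt t x)" using IND_D(1)[OF It] x vr_vt[OF t x] by simp
  also have "\<dots> = ereal (1 / (\<eta> - 1)) * ln_enn (Cint t x)"
    unfolding vt_def Cr_def[symmetric] using Cr by (simp add: ln_enn_ennreal)
  finally show "V t x = ereal (1 / (\<eta> - 1)) * ln_enn (\<integral>\<^sup>+u\<in>U. exp_e (- (ereal (1 - \<eta>) * Q t x u)) \<partial>lborel)"
    unfolding Ceq .
qed

end

theorem theorem3:
  fixes \<eta> :: real and T :: nat
    and X :: "'a::euclidean_space set" and U :: "'b::euclidean_space set"
    and K :: "'a \<Rightarrow> 'b \<Rightarrow> 'a measure"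
    and c :: "nat \<Rightarrow> 'a \<Rightarrow> 'b \<Rightarrow> real" and cT :: "'a \<Rightarrow> real"
  assumes eta: "\<eta> \<noteq> 0" "\<eta> \<noteq> 1"
    and T_pos: "T > 0"
    and X_meas: "X \<in> sets borel"
    and U_meas: "U \<in> sets borel" and U_pos: "emeasure lborel U > 0"
    and K_kernel: "(\<lambda>(x, u). K x u) \<in> restrict_space borel (X \<times> U) \<rightarrow>\<^sub>M prob_algebra borel"
    and K_X: "\<forall>x\<in>X. \<forall>u\<in>U. emeasure (K x u) X = 1"
    and c_meas: "\<forall>t<T. (\<lambda>(x, u). c t x u) \<in> borel_measurable (restrict_space borel (X \<times> U))"
    and cT_meas: "cT \<in> borel_measurable (restrict_space borel X)"
    and c_bdd: "\<forall>t<T. \<exists>b. \<forall>x\<in>X. \<forall>u\<in>U. b \<le> c t x u"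
    and cT_bdd: "\<exists>b. \<forall>x\<in>X. b \<le> cT x"
    and Q_finite: "\<forall>t<T. \<forall>x\<in>X. \<forall>u\<in>U. \<bar>Q_fn \<eta> T X U K c cT t x u\<bar> \<noteq> \<infinity>"
    and int1: "\<forall>t<T. \<forall>x\<in>X. (\<integral>\<^sup>+u\<in>U. exp_e (- Q_fn \<eta> T X U K c cT t x u) \<partial>lborel) < \<top>"
    and int2: "\<forall>t<T. \<forall>x\<in>X.
                 (\<integral>\<^sup>+u\<in>U. exp_e (- (ereal (1 - \<eta>) * Q_fn \<eta> T X U K c cT t x u)) \<partial>lborel) < \<top>"
  shows
    \<comment> \<open>pi* is an admissible policy\<close>
    "admissible_policy \<eta> T X U 0 (opt_policy \<eta> T X U K c cT)
     \<comment> \<open>pi* attains the value function V_t(x) for every t and x\<close>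
     \<and> (\<forall>t<T. \<forall>x\<in>X. cost_to_go \<eta> T U K c cT (opt_policy \<eta> T X U K c cT) t x
                        = value_fn \<eta> T X U K c cT t x)
     \<comment> \<open>pi* is optimal for problem (**), for every initial distribution on X\<close>
     \<and> (\<forall>\<mu>0 \<pi>. prob_space \<mu>0 \<and> sets \<mu>0 = sets borel \<and> emeasure \<mu>0 X = 1
                \<and> admissible_policy \<eta> T X U 0 \<pi>
              \<longrightarrow> total_obj \<eta> T U K c cT \<mu>0 (opt_policy \<eta> T X U K c cT)
                    \<le> total_obj \<eta> T U K c cT \<mu>0 \<pi>)
     \<comment> \<open>uniqueness: any optimal policy coincides with pi* (a.e. in u, as densities)\<close>
     \<and> (\<forall>\<pi>. admissible_policy \<eta> T X U 0 \<pi>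
             \<and> (\<forall>t<T. \<forall>x\<in>X. cost_to_go \<eta> T U K c cT \<pi> t x = value_fn \<eta> T X U K c cT t x)
           \<longrightarrow> (\<forall>t<T. \<forall>x\<in>X. AE u in lborel. u \<in> U \<longrightarrow> \<pi> t x u = opt_policy \<eta> T X U K c cT t x u))
     \<comment> \<open>closed form of the value function\<close>
     \<and> (\<forall>t<T. \<forall>x\<in>X. value_fn \<eta> T X U K c cT t x
           = ereal (1 / (\<eta> - 1)) *
             ln_enn (\<integral>\<^sup>+u\<in>U. exp_e (- (ereal (1 - \<eta>) * Q_fn \<eta> T X U K c cT t x u)) \<partial>lborel))"
  proof -
  interpret rs_setting \<eta> T X U K c cT
    by unfold_locales (fact assms)+
  show ?thesis by (rule main_result)
qed

end
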